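(* Let $\succ$ be a binary relation on $\mathcal{F}$ admitting a unique hope-and-prepare representation $(u,C,D)$: $u:X\to\mathbb{R}$ non-constant affine (unique up to positive affine transformation), $C,D\subseteq\Delta$ unique convex compact sets with $C\cap D\neq\emptyset$, and for all $f,g\in\mathcal{F}$, $f\succ g$ iff $\min_{p\in C}\int u(f)\,dp>\min_{p\in C}\int u(g)\,dp$ and $\max_{p\in D}\int u(f)\,dp>\max_{p\in D}\int u(g)\,dp$. For a binary relation $\succ^*$ on $\mathcal{F}$, the following are equivalent: (i) $\succ^*$ is an invariant biseparable preference and an extension of $\succ$ (i.e. $f\succ g$ implies $f\succ^* g$ for all $f,g\in\mathcal{F}$); (ii) there exists $\alpha\in[0,1]$ such that for all $f,g\in\mathcal{F}$, $$f\succ^* g\iff \alpha\min_{p\in C}\int u(f)\,dp+(1-\alpha)\max_{p\in D}\int u(f)\,dp>\alpha\min_{p\in C}\int u(g)\,dp+(1-\alpha)\max_{p\in D}\int u(g)\,dp,$$ and this $\alpha$ is unique whenever $\succ$ is not complete.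
   Context: $S$ is a set of states with algebra $\Sigma$; $X$ is a non-singleton convex subset of a real vector space; $\mathcal{F}$ is the set of simple acts $f:S\to X$ ($\Sigma$-measurable, finitely many values), with pointwise mixtures; elements of $X$ are identified with constant acts. $\Delta$ is the set of finitely additive probability measures on $(S,\Sigma)$ with the weak* topology. A binary relation $\succ^*$ on $\mathcal{F}$ is invariant biseparable if it is asymmetric, complete and negatively transitive and satisfies: (continuity) for all $f,g,h$, $\{\alpha\in[0,1]:\alpha f+(1-\alpha)g\succ^* h\}$ and $\{\alpha\in[0,1]:h\succ^*\alpha f+(1-\alpha)g\}$ are open in $[0,1]$; (certainty independence) for all $f,g\in\mathcal{F}$, $x\in X$, $\alpha\in(0,1)$, $f\succ^* g$ iff $\alpha f+(1-\alpha)x\succ^*\alpha g+(1-\alpha)x$; (monotonicity) if $f(s)\succ^* g(s)$ for all $s\in S$ then $f\succ^* g$. *)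

theory Defs
  imports "HOL-Analysis.Analysis"
begin

text \<open>States have type 'a, the algebra of events is Sig :: 'a set set (algebra on UNIV),
  outcomes have type 'b (a real vector space) and X :: 'b set is the convex outcome set.\<close>

definition simple_acts :: "'a set set \<Rightarrow> 'b set \<Rightarrow> ('a \<Rightarrow> 'b) set" where
  "simple_acts Sig X = {f. range f \<subseteq> X \<and> finite (range f) \<and> (\<forall>x. f -` {x} \<in> Sig)}"

definition mix :: "real \<Rightarrow> ('a \<Rightarrow> 'b::real_vector) \<Rightarrow> ('a \<Rightarrow> 'b) \<Rightarrow> ('a \<Rightarrow> 'b)" where
  "mix a f g = (\<lambda>s. a *\<^sub>R f s + (1 - a) *\<^sub>R g s)"

text \<open>Finitely additive probability measures on (UNIV, Sig), represented as set functions
  that vanish outside Sig (so that each measure has a unique representative).\<close>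
definition fa_probs :: "'a set set \<Rightarrow> ('a set \<Rightarrow> real) set" where
  "fa_probs Sig = {p. (\<forall>A\<in>Sig. 0 \<le> p A) \<and> p UNIV = 1
      \<and> (\<forall>A\<in>Sig. \<forall>B\<in>Sig. A \<inter> B = {} \<longrightarrow> p (A \<union> B) = p A + p B)
      \<and> (\<forall>A. A \<notin> Sig \<longrightarrow> p A = 0)}"

definition simple_int :: "('a set \<Rightarrow> real) \<Rightarrow> ('a \<Rightarrow> real) \<Rightarrow> real" where
  "simple_int p \<phi> = (\<Sum>y\<in>range \<phi>. y * p (\<phi> -` {y}))"

definition convex_measures :: "('a set \<Rightarrow> real) set \<Rightarrow> bool" where
  "convex_measures C \<longleftrightarrow> (\<forall>p\<in>C. \<forall>q\<in>C. \<forall>t::real. 0 \<le> t \<and> t \<le> 1 \<longrightarrow>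
      (\<lambda>A. t * p A + (1 - t) * q A) \<in> C)"

definition affine_on :: "'b::real_vector set \<Rightarrow> ('b \<Rightarrow> real) \<Rightarrow> bool" where
  "affine_on X u \<longleftrightarrow> (\<forall>x\<in>X. \<forall>y\<in>X. \<forall>t::real. 0 \<le> t \<and> t \<le> 1 \<longrightarrow>
      u (t *\<^sub>R x + (1 - t) *\<^sub>R y) = t * u x + (1 - t) * u y)"

text \<open>Minimum over C / maximum over D of expected utility (C, D compact nonempty,
  so Inf / Sup are attained).\<close>
definition minEU :: "('b \<Rightarrow> real) \<Rightarrow> ('a set \<Rightarrow> real) set \<Rightarrow> ('a \<Rightarrow> 'b) \<Rightarrow> real" where
  "minEU u C f = Inf ((\<lambda>p. simple_int p (u \<circ> f)) ` C)"

definition maxEU :: "('b \<Rightarrow> real) \<Rightarrow> ('a set \<Rightarrow> real) set \<Rightarrow> ('a \<Rightarrow> 'b) \<Rightarrow> real" where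
  "maxEU u D f = Sup ((\<lambda>p. simple_int p (u \<circ> f)) ` D)"

text \<open>Compactness is w.r.t. the product
  topology on 'a set => real, which on the set of finitely additive probabilities coincides
  with the weak* topology.\<close>
definition hp_rep :: "'a set set \<Rightarrow> 'b::real_vector set \<Rightarrow> (('a \<Rightarrow> 'b) \<Rightarrow> ('a \<Rightarrow> 'b) \<Rightarrow> bool)
     \<Rightarrow> ('b \<Rightarrow> real) \<Rightarrow> ('a set \<Rightarrow> real) set \<Rightarrow> ('a set \<Rightarrow> real) set \<Rightarrow> bool" where
  "hp_rep Sig X R u C D \<longleftrightarrow>
     affine_on X u \<and> (\<exists>x\<in>X. \<exists>y\<in>X. u x \<noteq> u y) \<and>
     C \<subseteq> fa_probs Sig \<and> D \<subseteq> fa_probs Sig \<and> convex_measures C \<and> convex_measures D \<and>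
     compact C \<and> compact D \<and> C \<inter> D \<noteq> {} \<and>
     (\<forall>f\<in>simple_acts Sig X. \<forall>g\<in>simple_acts Sig X.
        R f g \<longleftrightarrow> minEU u C f > minEU u C g \<and> maxEU u D f > maxEU u D g)"

definition unique_hp_rep :: "'a set set \<Rightarrow> 'b::real_vector set \<Rightarrow> (('a \<Rightarrow> 'b) \<Rightarrow> ('a \<Rightarrow> 'b) \<Rightarrow> bool)
     \<Rightarrow> ('b \<Rightarrow> real) \<Rightarrow> ('a set \<Rightarrow> real) set \<Rightarrow> ('a set \<Rightarrow> real) set \<Rightarrow> bool" where
  "unique_hp_rep Sig X R u C D \<longleftrightarrow> hp_rep Sig X R u C D \<and>
     (\<forall>u' C' D'. hp_rep Sig X R u' C' D' \<longrightarrow>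
        C' = C \<and> D' = D \<and> (\<exists>a b. a > 0 \<and> (\<forall>x\<in>X. u' x = a * u x + b)))"

definition rel_equiv :: "('f \<Rightarrow> 'f \<Rightarrow> bool) \<Rightarrow> 'f set \<Rightarrow> 'f \<Rightarrow> 'f \<Rightarrow> bool" where
  "rel_equiv R F f g \<longleftrightarrow> (\<forall>h\<in>F. (R f h \<longleftrightarrow> R g h) \<and> (R h f \<longleftrightarrow> R h g))"

definition rel_complete :: "('f \<Rightarrow> 'f \<Rightarrow> bool) \<Rightarrow> 'f set \<Rightarrow> bool" where
  "rel_complete R F \<longleftrightarrow> (\<forall>f\<in>F. \<forall>g\<in>F. R f g \<or> R g f \<or> rel_equiv R F f g)"

definition invariant_biseparable :: "'a set set \<Rightarrow> 'b::real_vector set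
     \<Rightarrow> (('a \<Rightarrow> 'b) \<Rightarrow> ('a \<Rightarrow> 'b) \<Rightarrow> bool) \<Rightarrow> bool" where
  "invariant_biseparable Sig X R \<longleftrightarrow> (let F = simple_acts Sig X in
     (\<forall>f\<in>F. \<forall>g\<in>F. R f g \<longrightarrow> \<not> R g f) \<and>
     rel_complete R F \<and>
     (\<forall>f\<in>F. \<forall>g\<in>F. \<forall>h\<in>F. \<not> R f g \<and> \<not> R g h \<longrightarrow> \<not> R f h) \<and>
     (\<forall>f\<in>F. \<forall>g\<in>F. \<forall>h\<in>F.
        openin (top_of_set {0..1}) {a\<in>{0..1::real}. R (mix a f g) h} \<and>
        openin (top_of_set {0..1}) {a\<in>{0..1::real}. R h (mix a f g)}) \<and>
     (\<forall>f\<in>F. \<forall>g\<in>F. \<forall>x\<in>X. \<forall>a::real. 0 < a \<and> a < 1 \<longrightarrow>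
        (R f g \<longleftrightarrow> R (mix a f (\<lambda>_. x)) (mix a g (\<lambda>_. x)))) \<and>
     (\<forall>f\<in>F. \<forall>g\<in>F. (\<forall>s. R (\<lambda>_. f s) (\<lambda>_. g s)) \<longrightarrow> R f g))"

end

theory Submission
  imports Defs
begin

lemma alg_facts:
  assumes alg: "algebra UNIV Sig"
  shows "{} \<in> Sig" "UNIV \<in> Sig" "\<And>A B. A \<in> Sig \<Longrightarrow> B \<in> Sig \<Longrightarrow> A \<inter> B \<in> Sig"
    "\<And>I A. finite I \<Longrightarrow> (\<And>i. i \<in> I \<Longrightarrow> A i \<in> Sig) \<Longrightarrow> (\<Union>i\<in>I. A i) \<in> Sig"
proof -
  interpret algebra UNIV Sig by (fact alg)
  show "{} \<in> Sig" "UNIV \<in> Sig" "\<And>A B. A \<in> Sig \<Longrightarrow> B \<in> Sig \<Longrightarrow> A \<inter> B \<in> Sig"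
    "\<And>I A. finite I \<Longrightarrow> (\<And>i. i \<in> I \<Longrightarrow> A i \<in> Sig) \<Longrightarrow> (\<Union>i\<in>I. A i) \<in> Sig"
    by auto
qed

lemma fa_facts:
  assumes alg: "algebra UNIV Sig" and p: "p \<in> fa_probs Sig"
  shows "p UNIV = 1" "\<And>A. A \<in> Sig \<Longrightarrow> 0 \<le> p A"
    "\<And>A B. A \<in> Sig \<Longrightarrow> B \<in> Sig \<Longrightarrow> A \<inter> B = {} \<Longrightarrow> p (A \<union> B) = p A + p B"
    "p {} = 0"
proof -
  show "p UNIV = 1" "\<And>A. A \<in> Sig \<Longrightarrow> 0 \<le> p A"
    "\<And>A B. A \<in> Sig \<Longrightarrow> B \<in> Sig \<Longrightarrow> A \<inter> B = {} \<Longrightarrow> p (A \<union> B) = p A + p B"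
    using p unfolding fa_probs_def by auto
  have "{} \<in> Sig" by (rule alg_facts(1)[OF alg])
  then have "p ({} \<union> {}) = p {} + p {}" using p unfolding fa_probs_def by blast
  then show "p {} = 0" by simp
qed

lemma fa_finite_add:
  assumes alg: "algebra UNIV Sig" and p: "p \<in> fa_probs Sig" and fin: "finite I"
    and B: "\<forall>i\<in>I. B i \<in> Sig" and dj: "disjoint_family_on B I"
  shows "p (\<Union>i\<in>I. B i) = (\<Sum>i\<in>I. p (B i))"
  using fin B dj
proof (induction I rule: finite_induct)
  case empty
  then show ?case using fa_facts[OF alg p] by simp
next
  case (insert i I)
  have U: "(\<Union>i\<in>I. B i) \<in> Sig"
    using insert alg by (intro alg_facts(4)) auto
  have dj: "B i \<inter> (\<Union>i\<in>I. B i) = {}"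
    using insert.prems(2) insert.hyps(2) unfolding disjoint_family_on_def by auto
  have "p (\<Union>j\<in>insert i I. B j) = p (B i \<union> (\<Union>i\<in>I. B i))" by simp
  also have "\<dots> = p (B i) + p (\<Union>i\<in>I. B i)"
    using fa_facts(3)[OF alg p _ U dj] insert.prems by auto
  also have "\<dots> = p (B i) + (\<Sum>i\<in>I. p (B i))"
    using insert.IH insert.prems disjoint_family_on_mono[of I "insert i I"] by auto
  finally show ?case using insert.hyps by simp
qed

lemma simple_int_comp:
  assumes alg: "algebra UNIV Sig" and p: "p \<in> fa_probs Sig"
    and fin: "finite (range k)" and meas: "\<forall>v. k -` {v} \<in> Sig"
  shows "simple_int p (\<lambda>s. h (k s)) = (\<Sum>v\<in>range k. h v * p (k -` {v}))"
proof -
  have pre: "(\<lambda>s. h (k s)) -` {y} = (\<Union>v\<in>{v\<in>range k. h v = y}. k -` {v})" for y by auto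
  have pp: "p ((\<lambda>s. h (k s)) -` {y}) = (\<Sum>v\<in>{v\<in>range k. h v = y}. p (k -` {v}))" for y
    unfolding pre by (rule fa_finite_add[OF alg p]) (auto simp: disjoint_family_on_def fin meas)
  have rg: "range (\<lambda>s. h (k s)) = h ` range k" by auto
  have "simple_int p (\<lambda>s. h (k s)) = (\<Sum>y\<in>h ` range k. y * p ((\<lambda>s. h (k s)) -` {y}))"
    unfolding simple_int_def rg ..
  also have "\<dots> = (\<Sum>y\<in>h ` range k. \<Sum>v\<in>{v\<in>range k. h v = y}. h v * p (k -` {v}))"
    unfolding pp sum_distrib_left by (intro sum.cong refl) auto
  also have "\<dots> = (\<Sum>v\<in>range k. h v * p (k -` {v}))"
    by (rule sum.group) (use fin in auto)
  finally show ?thesis .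
qed

lemma simple_int_const:
  assumes alg: "algebra UNIV Sig" and p: "p \<in> fa_probs Sig"
  shows "simple_int p (\<lambda>s. c) = c"
proof -
  have "range (\<lambda>s::'a. c) = {c}" by auto
  then show ?thesis unfolding simple_int_def using fa_facts(1)[OF alg p] by simp
qed

lemma mass_one:
  assumes alg: "algebra UNIV Sig" and p: "p \<in> fa_probs Sig"
    and fin: "finite (range k)" and meas: "\<forall>v. k -` {v} \<in> Sig"
  shows "(\<Sum>v\<in>range k. p (k -` {v})) = 1"
  using simple_int_comp[OF alg p fin meas, of "\<lambda>_. 1"] simple_int_const[OF alg p, of 1] by simp

lemma comp_meas:
  assumes alg: "algebra UNIV Sig"
    and fin: "finite (range k)" and meas: "\<forall>v. k -` {v} \<in> Sig"
  shows "finite (range (\<lambda>s. h (k s)))" "(\<lambda>s. h (k s)) -` {y} \<in> Sig"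
proof -
  have rg: "range (\<lambda>s. h (k s)) = h ` range k" by auto
  then show "finite (range (\<lambda>s. h (k s)))" using fin by simp
  have pre: "(\<lambda>s. h (k s)) -` {y} = (\<Union>v\<in>{v\<in>range k. h v = y}. k -` {v})" by auto
  show "(\<lambda>s. h (k s)) -` {y} \<in> Sig" unfolding pre
    using alg fin meas by (intro alg_facts(4)) auto
qed



definition EU :: "('b \<Rightarrow> real) \<Rightarrow> ('a set \<Rightarrow> real) \<Rightarrow> ('a \<Rightarrow> 'b) \<Rightarrow> real" where
  "EU u p f = simple_int p (\<lambda>s. u (f s))"

locale hp_setup =
  fixes Sig :: "'a set set" and X :: "'b::real_vector set" and u :: "'b \<Rightarrow> real"
    and C D :: "('a set \<Rightarrow> real) set"
  assumes alg: "algebra UNIV Sig" and cvx: "convex X" and aff: "affine_on X u"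
    and ncst: "\<exists>x\<in>X. \<exists>y\<in>X. u x \<noteq> u y"
    and CP: "C \<subseteq> fa_probs Sig" and DP: "D \<subseteq> fa_probs Sig" and CD: "C \<inter> D \<noteq> {}"
begin

abbreviation "F \<equiv> simple_acts Sig X"
abbreviation "mC f \<equiv> minEU u C f"
abbreviation "MD f \<equiv> maxEU u D f"

lemma mC_def': "mC f = Inf ((\<lambda>p. EU u p f) ` C)"
  by (simp add: minEU_def EU_def o_def)
lemma MD_def': "MD f = Sup ((\<lambda>p. EU u p f) ` D)"
  by (simp add: maxEU_def EU_def o_def)

lemma inF: "f \<in> F \<longleftrightarrow> range f \<subseteq> X \<and> finite (range f) \<and> (\<forall>x. f -` {x} \<in> Sig)"
  by (simp add: simple_acts_def)

lemma Fval: "f \<in> F \<Longrightarrow> f s \<in> X"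
  by (auto simp: inF)

lemma cst_F: "x \<in> X \<Longrightarrow> (\<lambda>_. x) \<in> F"
proof -
  assume x: "x \<in> X"
  have "(\<lambda>_::'a. x) -` {y} = (if y = x then UNIV else {})" for y by auto
  then show ?thesis using x alg_facts(1,2)[OF alg] by (auto simp: inF)
qed

lemma joint:
  assumes "f \<in> F" "g \<in> F"
  shows "finite (range (\<lambda>s. (f s, g s)))" "\<forall>vw. (\<lambda>s. (f s, g s)) -` {vw} \<in> Sig"
proof -
  have "range (\<lambda>s. (f s, g s)) \<subseteq> range f \<times> range g" by auto
  moreover have "finite (range f \<times> range g)" using assms by (auto simp: inF)
  ultimately show "finite (range (\<lambda>s. (f s, g s)))" by (rule finite_subset)
  have "(\<lambda>s. (f s, g s)) -` {vw} = f -` {fst vw} \<inter> g -` {snd vw}" for vw by (cases vw) auto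
  then show "\<forall>vw. (\<lambda>s. (f s, g s)) -` {vw} \<in> Sig" using assms alg_facts(3)[OF alg] by (auto simp: inF)
qed

lemma u_mix:
  assumes "x \<in> X" "y \<in> X" "0 \<le> a" "a \<le> 1"
  shows "u (a *\<^sub>R x + (1 - a) *\<^sub>R y) = a * u x + (1 - a) * u y"
    "a *\<^sub>R x + (1 - a) *\<^sub>R y \<in> X"
  using aff assms unfolding affine_on_def apply blast
  using convexD[OF cvx assms(1,2), of a "1-a"] assms by simp

lemma mix_F:
  assumes "f \<in> F" "g \<in> F" "0 \<le> a" "a \<le> 1"
  shows "mix a f g \<in> F"
proof -
  let ?k = "\<lambda>s. (f s, g s)" and ?h = "\<lambda>vw. a *\<^sub>R fst vw + (1 - a) *\<^sub>R snd vw"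
  have eq: "mix a f g = (\<lambda>s. ?h (?k s))" by (simp add: mix_def)
  show ?thesis unfolding eq inF
    using comp_meas[OF alg joint[OF assms(1,2)], of ?h] u_mix(2)[OF Fval[OF assms(1)] Fval[OF assms(2)] assms(3,4)]
    by auto
qed

lemma mix_cst: "mix a (\<lambda>_. x) (\<lambda>_. y) = (\<lambda>_. a *\<^sub>R x + (1 - a) *\<^sub>R y)"
  by (simp add: mix_def)
lemma mix1: "mix 1 f g = f" by (simp add: mix_def)
lemma mix0: "mix 0 f g = g" by (simp add: mix_def)

lemma EU_const: "p \<in> fa_probs Sig \<Longrightarrow> EU u p (\<lambda>_. x) = u x"
  unfolding EU_def by (rule simple_int_const[OF alg])

lemma EU_joint:
  assumes "p \<in> fa_probs Sig" "f \<in> F" "g \<in> F"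
  shows "EU u p f = (\<Sum>vw\<in>range (\<lambda>s. (f s, g s)). u (fst vw) * p ((\<lambda>s. (f s, g s)) -` {vw}))"
    "EU u p g = (\<Sum>vw\<in>range (\<lambda>s. (f s, g s)). u (snd vw) * p ((\<lambda>s. (f s, g s)) -` {vw}))"
  using simple_int_comp[OF alg assms(1) joint[OF assms(2,3)], of "\<lambda>vw. u (fst vw)"]
    simple_int_comp[OF alg assms(1) joint[OF assms(2,3)], of "\<lambda>vw. u (snd vw)"]
  by (simp_all add: EU_def)

lemma EU_mix:
  assumes p: "p \<in> fa_probs Sig" and fg: "f \<in> F" "g \<in> F" and a: "0 \<le> a" "a \<le> 1"
  shows "EU u p (mix a f g) = a * EU u p f + (1 - a) * EU u p g"
proof -
  let ?k = "\<lambda>s. (f s, g s)"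
  have "EU u p (mix a f g) = simple_int p (\<lambda>s. (\<lambda>vw. u (a *\<^sub>R fst vw + (1 - a) *\<^sub>R snd vw)) (?k s))"
    by (simp add: EU_def mix_def)
  also have "\<dots> = (\<Sum>vw\<in>range ?k. u (a *\<^sub>R fst vw + (1 - a) *\<^sub>R snd vw) * p (?k -` {vw}))"
    by (rule simple_int_comp[OF alg p joint[OF fg]])
  also have "\<dots> = (\<Sum>vw\<in>range ?k. a * (u (fst vw) * p (?k -` {vw})) + (1 - a) * (u (snd vw) * p (?k -` {vw})))"
  proof (intro sum.cong refl)
    fix vw assume "vw \<in> range ?k"
    then obtain s where s: "vw = ?k s" by auto
    have e: "u (a *\<^sub>R fst vw + (1 - a) *\<^sub>R snd vw) = a * u (fst vw) + (1 - a) * u (snd vw)"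
      unfolding s fst_conv snd_conv by (rule u_mix(1)[OF Fval[OF fg(1)] Fval[OF fg(2)] a])
    show "u (a *\<^sub>R fst vw + (1 - a) *\<^sub>R snd vw) * p (?k -` {vw}) =
      a * (u (fst vw) * p (?k -` {vw})) + (1 - a) * (u (snd vw) * p (?k -` {vw}))"
      unfolding e by (simp add: algebra_simps)
  qed
  also have "\<dots> = a * EU u p f + (1 - a) * EU u p g"
    unfolding EU_joint[OF p fg] sum.distrib sum_distrib_left ..
  finally show ?thesis .
qed

lemma EU_mixc:
  assumes p: "p \<in> fa_probs Sig" and f: "f \<in> F" and x: "x \<in> X" and a: "0 \<le> a" "a \<le> 1"
  shows "EU u p (mix a f (\<lambda>_. x)) = a * EU u p f + (1 - a) * u x"
  using EU_mix[OF p f cst_F[OF x] a] EU_const[OF p] by simp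

lemma EU_bounds:
  assumes f: "f \<in> F"
  shows "\<exists>x1\<in>X. \<exists>x2\<in>X. \<forall>p\<in>fa_probs Sig. u x1 \<le> EU u p f \<and> EU u p f \<le> u x2"
proof -
  have fin: "finite (range f)" and meas: "\<forall>v. f -` {v} \<in> Sig" using f by (auto simp: inF)
  have ne: "u ` range f \<noteq> {}" by auto
  obtain v1 where v1: "v1 \<in> range f" "u v1 = Min (u ` range f)"
    using Min_in[OF finite_imageI[OF fin] ne] by (metis imageE)
  obtain v2 where v2: "v2 \<in> range f" "u v2 = Max (u ` range f)"
    using Max_in[OF finite_imageI[OF fin] ne] by (metis imageE)
  have "u v1 \<le> EU u p f \<and> EU u p f \<le> u v2" if p: "p \<in> fa_probs Sig" for p
  proof -
    have e: "EU u p f = (\<Sum>v\<in>range f. u v * p (f -` {v}))"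
      using simple_int_comp[OF alg p fin meas, of u] by (simp add: EU_def)
    have ms: "(\<Sum>v\<in>range f. p (f -` {v})) = 1" using mass_one[OF alg p fin meas] .
    have nn: "0 \<le> p (f -` {v})" for v using fa_facts(2)[OF alg p] meas by auto
    have "u v1 = (\<Sum>v\<in>range f. u v1 * p (f -` {v}))" using ms by (simp add: sum_distrib_left[symmetric])
    also have "\<dots> \<le> (\<Sum>v\<in>range f. u v * p (f -` {v}))"
      by (intro sum_mono mult_right_mono nn) (use v1 fin in auto)
    finally have 1: "u v1 \<le> EU u p f" using e by simp
    have "(\<Sum>v\<in>range f. u v * p (f -` {v})) \<le> (\<Sum>v\<in>range f. u v2 * p (f -` {v}))"
      by (intro sum_mono mult_right_mono nn) (use v2 fin in auto)
    also have "\<dots> = u v2" using ms by (simp add: sum_distrib_left[symmetric])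
    finally show ?thesis using 1 e by simp
  qed
  moreover have "v1 \<in> X" "v2 \<in> X" using v1 v2 f by (auto simp: inF)
  ultimately show ?thesis by blast
qed

lemma EU_mono:
  assumes f: "f \<in> F" and g: "g \<in> F" and lt: "\<forall>s. u (g s) < u (f s)"
  shows "\<exists>e>0. \<forall>p\<in>fa_probs Sig. EU u p g + e \<le> EU u p f"
proof -
  let ?k = "\<lambda>s. (f s, g s)"
  let ?d = "\<lambda>vw. u (fst vw) - u (snd vw)"
  have fin: "finite (?d ` range ?k)" using joint(1)[OF f g] by simp
  have ne: "?d ` range ?k \<noteq> {}" by auto
  define e where "e = Min (?d ` range ?k)"
  have epos: "e > 0" unfolding e_def using Min_in[OF fin ne] lt by auto
  have ele: "e \<le> ?d vw" if "vw \<in> range ?k" for vw unfolding e_def using fin that by simp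
  have "EU u p g + e \<le> EU u p f" if p: "p \<in> fa_probs Sig" for p
  proof -
    have nn: "0 \<le> p (?k -` {v})" for v using fa_facts(2)[OF alg p] joint(2)[OF f g] by blast
    have ms: "(\<Sum>v\<in>range ?k. p (?k -` {v})) = 1" using mass_one[OF alg p joint[OF f g]] .
    have "e = (\<Sum>vw\<in>range ?k. e * p (?k -` {vw}))" using ms by (simp add: sum_distrib_left[symmetric])
    also have "\<dots> \<le> (\<Sum>vw\<in>range ?k. ?d vw * p (?k -` {vw}))"
      by (intro sum_mono mult_right_mono nn ele) auto
    also have "\<dots> = EU u p f - EU u p g"
      unfolding EU_joint[OF p f g] sum_subtractf[symmetric] by (simp add: algebra_simps)
    finally show ?thesis by simp
  qed
  then show ?thesis using epos by blast
qed

lemma CDne: "C \<noteq> {}" "D \<noteq> {}" using CD by auto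

lemma bddC: "f \<in> F \<Longrightarrow> bdd_below ((\<lambda>p. EU u p f) ` C)"
  using EU_bounds CP unfolding bdd_below_def by blast
lemma bddD: "f \<in> F \<Longrightarrow> bdd_above ((\<lambda>p. EU u p f) ` D)"
  using EU_bounds DP unfolding bdd_above_def by blast

lemma m_le: "f \<in> F \<Longrightarrow> p \<in> C \<Longrightarrow> mC f \<le> EU u p f"
  unfolding mC_def' by (rule cInf_lower) (auto intro: bddC)
lemma m_ge: "(\<And>p. p \<in> C \<Longrightarrow> c \<le> EU u p f) \<Longrightarrow> c \<le> mC f"
  unfolding mC_def' using CDne by (intro cInf_greatest) auto
lemma M_ge: "f \<in> F \<Longrightarrow> p \<in> D \<Longrightarrow> EU u p f \<le> MD f"
  unfolding MD_def' by (rule cSup_upper) (auto intro: bddD)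
lemma M_le: "(\<And>p. p \<in> D \<Longrightarrow> EU u p f \<le> c) \<Longrightarrow> MD f \<le> c"
  unfolding MD_def' using CDne by (intro cSup_least) auto

lemma m_cst: "x \<in> X \<Longrightarrow> mC (\<lambda>_. x) = u x"
proof -
  assume x: "x \<in> X"
  obtain q where q: "q \<in> C" using CDne by blast
  have "mC (\<lambda>_. x) \<le> u x" using m_le[OF cst_F[OF x] q] EU_const q CP by auto
  moreover have "u x \<le> mC (\<lambda>_. x)" by (rule m_ge) (use EU_const CP in auto)
  ultimately show ?thesis by simp
qed
lemma M_cst: "x \<in> X \<Longrightarrow> MD (\<lambda>_. x) = u x"
proof -
  assume x: "x \<in> X"
  obtain q where q: "q \<in> D" using CDne by blast
  have "u x \<le> MD (\<lambda>_. x)" using M_ge[OF cst_F[OF x] q] EU_const q DP by auto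
  moreover have "MD (\<lambda>_. x) \<le> u x" by (rule M_le) (use EU_const DP in auto)
  ultimately show ?thesis by simp
qed

lemma m_le_M: "f \<in> F \<Longrightarrow> mC f \<le> MD f"
proof -
  assume f: "f \<in> F"
  obtain q where "q \<in> C" "q \<in> D" using CD by blast
  then show ?thesis using m_le[OF f] M_ge[OF f] by (meson order_trans)
qed

lemma mM_bounds:
  assumes f: "f \<in> F"
  shows "\<exists>x1\<in>X. \<exists>x2\<in>X. u x1 \<le> mC f \<and> MD f \<le> u x2"
proof -
  obtain x1 x2 where x: "x1 \<in> X" "x2 \<in> X" "\<forall>p\<in>fa_probs Sig. u x1 \<le> EU u p f \<and> EU u p f \<le> u x2"
    using EU_bounds[OF f] by blast
  have "u x1 \<le> mC f" using x CP by (intro m_ge) auto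
  moreover have "MD f \<le> u x2" using x DP by (intro M_le) auto
  ultimately show ?thesis using x by blast
qed

lemma interval:
  assumes "x1 \<in> X" "x2 \<in> X" "u x1 \<le> t" "t \<le> u x2"
  shows "\<exists>y\<in>X. u y = t"
proof (cases "u x1 = u x2")
  case True
  then show ?thesis using assms by (intro bexI[of _ x1]) auto
next
  case False
  define a where "a = (t - u x1) / (u x2 - u x1)"
  have d: "u x2 - u x1 > 0" using assms False by simp
  have a: "0 \<le> a" "a \<le> 1" unfolding a_def using assms d by (auto simp: field_simps)
  have "u (a *\<^sub>R x2 + (1 - a) *\<^sub>R x1) = a * u x2 + (1 - a) * u x1" using u_mix[OF assms(2,1) a] by simp
  moreover have "a * u x2 + (1 - a) * u x1 = u x1 + a * (u x2 - u x1)" by (simp add: algebra_simps)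
  moreover have "a * (u x2 - u x1) = t - u x1" unfolding a_def using d by simp
  ultimately have "u (a *\<^sub>R x2 + (1 - a) *\<^sub>R x1) = t" by simp
  then show ?thesis using u_mix(2)[OF assms(2,1) a] by blast
qed

lemma in_range:
  assumes f: "f \<in> F" "mC f \<le> t" "t \<le> MD f"
  shows "\<exists>y\<in>X. u y = t"
  using mM_bounds[OF f(1)] interval assms by (meson order_trans)

lemma m_mixc:
  assumes f: "f \<in> F" and x: "x \<in> X" and a: "0 \<le> a" "a \<le> 1"
  shows "mC (mix a f (\<lambda>_. x)) = a * mC f + (1 - a) * u x"
proof (rule antisym)
  have mf: "mix a f (\<lambda>_. x) \<in> F" using mix_F[OF f cst_F[OF x] a] .
  show "a * mC f + (1 - a) * u x \<le> mC (mix a f (\<lambda>_. x))"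
  proof (rule m_ge)
    fix p assume p: "p \<in> C"
    then have pf: "p \<in> fa_probs Sig" using CP by auto
    have "a * mC f \<le> a * EU u p f" using m_le[OF f p] a by (intro mult_left_mono) auto
    then show "a * mC f + (1 - a) * u x \<le> EU u p (mix a f (\<lambda>_. x))" using EU_mixc[OF pf f x a] by simp
  qed
  show "mC (mix a f (\<lambda>_. x)) \<le> a * mC f + (1 - a) * u x"
  proof (cases "a = 0")
    case True
    then show ?thesis using m_le[OF mf] CDne CP EU_mixc[OF _ f x a] by fastforce
  next
    case False
    then have ap: "a > 0" using a by simp
    have "(mC (mix a f (\<lambda>_. x)) - (1 - a) * u x) / a \<le> mC f"
    proof (rule m_ge)
      fix p assume p: "p \<in> C"
      have "mC (mix a f (\<lambda>_. x)) \<le> a * EU u p f + (1 - a) * u x"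
        using m_le[OF mf p] EU_mixc[OF _ f x a] p CP by auto
      then show "(mC (mix a f (\<lambda>_. x)) - (1 - a) * u x) / a \<le> EU u p f"
        using ap by (simp add: field_simps)
    qed
    then show ?thesis using ap by (simp add: field_simps)
  qed
qed

lemma M_mixc:
  assumes f: "f \<in> F" and x: "x \<in> X" and a: "0 \<le> a" "a \<le> 1"
  shows "MD (mix a f (\<lambda>_. x)) = a * MD f + (1 - a) * u x"
proof (rule antisym)
  have mf: "mix a f (\<lambda>_. x) \<in> F" using mix_F[OF f cst_F[OF x] a] .
  show "MD (mix a f (\<lambda>_. x)) \<le> a * MD f + (1 - a) * u x"
  proof (rule M_le)
    fix p assume p: "p \<in> D"
    then have pf: "p \<in> fa_probs Sig" using DP by auto
    have "a * EU u p f \<le> a * MD f" using M_ge[OF f p] a by (intro mult_left_mono) auto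
    then show "EU u p (mix a f (\<lambda>_. x)) \<le> a * MD f + (1 - a) * u x" using EU_mixc[OF pf f x a] by simp
  qed
  show "a * MD f + (1 - a) * u x \<le> MD (mix a f (\<lambda>_. x))"
  proof (cases "a = 0")
    case True
    then show ?thesis using M_ge[OF mf] CDne DP EU_mixc[OF _ f x a] by fastforce
  next
    case False
    then have ap: "a > 0" using a by simp
    have "MD f \<le> (MD (mix a f (\<lambda>_. x)) - (1 - a) * u x) / a"
    proof (rule M_le)
      fix p assume p: "p \<in> D"
      have "a * EU u p f + (1 - a) * u x \<le> MD (mix a f (\<lambda>_. x))"
        using M_ge[OF mf p] EU_mixc[OF _ f x a] p DP by auto
      then show "EU u p f \<le> (MD (mix a f (\<lambda>_. x)) - (1 - a) * u x) / a"
        using ap by (simp add: field_simps)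
    qed
    then show ?thesis using ap by (simp add: field_simps)
  qed
qed

lemma mM_mono:
  assumes f: "f \<in> F" and g: "g \<in> F" and lt: "\<forall>s. u (g s) < u (f s)"
  shows "mC g < mC f" "MD g < MD f"
proof -
  obtain e where e: "e > 0" "\<forall>p\<in>fa_probs Sig. EU u p g + e \<le> EU u p f" using EU_mono[OF f g lt] by blast
  have "mC g + e \<le> mC f"
  proof (rule m_ge)
    fix p assume p: "p \<in> C"
    then have "EU u p g + e \<le> EU u p f" using e CP by auto
    then show "mC g + e \<le> EU u p f" using m_le[OF g p] by simp
  qed
  then show "mC g < mC f" using e by simp
  have "MD g \<le> MD f - e"
  proof (rule M_le)
    fix p assume p: "p \<in> D"
    then have "EU u p g + e \<le> EU u p f" using e DP by auto
    then show "EU u p g \<le> MD f - e" using M_ge[OF f p] by simp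
  qed
  then show "MD g < MD f" using e by simp
qed

lemma ncst2: "\<exists>z1\<in>X. \<exists>z2\<in>X. u z1 < u z2"
  using ncst by (metis linorder_neqE_linordered_idom)

end



lemma Inf_lip:
  fixes e1 e2 :: "'p \<Rightarrow> real"
  assumes ne: "C \<noteq> {}" and b1: "bdd_below (e1 ` C)" and b2: "bdd_below (e2 ` C)"
    and d: "\<And>p. p \<in> C \<Longrightarrow> \<bar>e1 p - e2 p\<bar> \<le> d"
  shows "\<bar>Inf (e1 ` C) - Inf (e2 ` C)\<bar> \<le> d"
proof -
  have "Inf (e1 ` C) - d \<le> Inf (e2 ` C)"
  proof (rule cInf_greatest)
    show "e2 ` C \<noteq> {}" using ne by simp
    fix y assume "y \<in> e2 ` C"
    then obtain p where p: "p \<in> C" "y = e2 p" by auto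
    have "Inf (e1 ` C) \<le> e1 p" using b1 p by (intro cInf_lower) auto
    then show "Inf (e1 ` C) - d \<le> y" using d[OF p(1)] p by linarith
  qed
  moreover have "Inf (e2 ` C) - d \<le> Inf (e1 ` C)"
  proof (rule cInf_greatest)
    show "e1 ` C \<noteq> {}" using ne by simp
    fix y assume "y \<in> e1 ` C"
    then obtain p where p: "p \<in> C" "y = e1 p" by auto
    have "Inf (e2 ` C) \<le> e2 p" using b2 p by (intro cInf_lower) auto
    then show "Inf (e2 ` C) - d \<le> y" using d[OF p(1)] p by linarith
  qed
  ultimately show ?thesis by linarith
qed

lemma Sup_lip:
  fixes e1 e2 :: "'p \<Rightarrow> real"
  assumes ne: "C \<noteq> {}" and b1: "bdd_above (e1 ` C)" and b2: "bdd_above (e2 ` C)"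
    and d: "\<And>p. p \<in> C \<Longrightarrow> \<bar>e1 p - e2 p\<bar> \<le> d"
  shows "\<bar>Sup (e1 ` C) - Sup (e2 ` C)\<bar> \<le> d"
proof -
  have "Sup (e1 ` C) \<le> Sup (e2 ` C) + d"
  proof (rule cSup_least)
    show "e1 ` C \<noteq> {}" using ne by simp
    fix y assume "y \<in> e1 ` C"
    then obtain p where p: "p \<in> C" "y = e1 p" by auto
    have "e2 p \<le> Sup (e2 ` C)" using b2 p by (intro cSup_upper) auto
    then show "y \<le> Sup (e2 ` C) + d" using d[OF p(1)] p by linarith
  qed
  moreover have "Sup (e2 ` C) \<le> Sup (e1 ` C) + d"
  proof (rule cSup_least)
    show "e2 ` C \<noteq> {}" using ne by simp
    fix y assume "y \<in> e2 ` C"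
    then obtain p where p: "p \<in> C" "y = e2 p" by auto
    have "e1 p \<le> Sup (e1 ` C)" using b1 p by (intro cSup_upper) auto
    then show "y \<le> Sup (e1 ` C) + d" using d[OF p(1)] p by linarith
  qed
  ultimately show ?thesis by linarith
qed

context hp_setup
begin

definition W :: "real \<Rightarrow> ('a \<Rightarrow> 'b) \<Rightarrow> real" where
  "W a f = a * mC f + (1 - a) * MD f"

lemma W_range:
  assumes f: "f \<in> F" and a: "0 \<le> a" "a \<le> 1"
  shows "mC f \<le> W a f" "W a f \<le> MD f"
proof -
  have le: "mC f \<le> MD f" by (rule m_le_M[OF f])
  have 1: "W a f - mC f = (1 - a) * (MD f - mC f)" unfolding W_def by (simp add: algebra_simps)
  have 2: "MD f - W a f = a * (MD f - mC f)" unfolding W_def by (simp add: algebra_simps)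
  have 3: "0 \<le> (1 - a) * (MD f - mC f)" "0 \<le> a * (MD f - mC f)" using le a by auto
  show "mC f \<le> W a f" using 1 3(1) by linarith
  show "W a f \<le> MD f" using 2 3(2) by linarith
qed

lemma W_in: "f \<in> F \<Longrightarrow> 0 \<le> a \<Longrightarrow> a \<le> 1 \<Longrightarrow> \<exists>x\<in>X. u x = W a f"
  using in_range W_range by blast

lemma W_cst: "x \<in> X \<Longrightarrow> W a (\<lambda>_. x) = u x"
  unfolding W_def using m_cst M_cst by (simp add: algebra_simps)

lemma W_mixc:
  assumes "f \<in> F" "x \<in> X" "0 \<le> b" "b \<le> 1"
  shows "W a (mix b f (\<lambda>_. x)) = b * W a f + (1 - b) * u x"
  unfolding W_def m_mixc[OF assms] M_mixc[OF assms] by (simp add: algebra_simps)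

lemma EU_lip:
  assumes f: "f \<in> F" and g: "g \<in> F"
  shows "\<exists>B\<ge>0. \<forall>p\<in>fa_probs Sig. \<forall>s\<in>{0..1}. \<forall>t\<in>{0..1}.
           \<bar>EU u p (mix s f g) - EU u p (mix t f g)\<bar> \<le> B * \<bar>s - t\<bar>"
proof -
  obtain x1 x2 where x: "\<forall>p\<in>fa_probs Sig. u x1 \<le> EU u p f \<and> EU u p f \<le> u x2" using EU_bounds[OF f] by blast
  obtain y1 y2 where y: "\<forall>p\<in>fa_probs Sig. u y1 \<le> EU u p g \<and> EU u p g \<le> u y2" using EU_bounds[OF g] by blast
  define B where "B = \<bar>u x1\<bar> + \<bar>u x2\<bar> + \<bar>u y1\<bar> + \<bar>u y2\<bar>"
  have "\<bar>EU u p (mix s f g) - EU u p (mix t f g)\<bar> \<le> B * \<bar>s - t\<bar>"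
    if p: "p \<in> fa_probs Sig" and s: "s \<in> {0..1}" and t: "t \<in> {0..1}" for p s t
  proof -
    have "EU u p (mix s f g) - EU u p (mix t f g) = (s - t) * (EU u p f - EU u p g)"
      using EU_mix[OF p f g] s t by (simp add: algebra_simps)
    moreover have "\<bar>EU u p f - EU u p g\<bar> \<le> B"
    proof -
      have "u x1 \<le> EU u p f" "EU u p f \<le> u x2" "u y1 \<le> EU u p g" "EU u p g \<le> u y2" using x y p by auto
      then show ?thesis unfolding B_def by linarith
    qed
    ultimately have "\<bar>EU u p (mix s f g) - EU u p (mix t f g)\<bar> = \<bar>s - t\<bar> * \<bar>EU u p f - EU u p g\<bar>"
      "\<bar>s - t\<bar> * \<bar>EU u p f - EU u p g\<bar> \<le> \<bar>s - t\<bar> * B"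
      by (simp_all add: abs_mult mult_left_mono)
    then show ?thesis by (simp add: mult.commute)
  qed
  moreover have "B \<ge> 0" unfolding B_def by simp
  ultimately show ?thesis by blast
qed

lemma W_cont:
  assumes f: "f \<in> F" and g: "g \<in> F" and a: "0 \<le> a" "a \<le> 1"
  shows "continuous_on {0..1} (\<lambda>t. W a (mix t f g))"
proof -
  obtain B where B: "B \<ge> 0" "\<forall>p\<in>fa_probs Sig. \<forall>s\<in>{0..1}. \<forall>t\<in>{0..1}.
           \<bar>EU u p (mix s f g) - EU u p (mix t f g)\<bar> \<le> B * \<bar>s - t\<bar>"
    using EU_lip[OF f g] by blast
  have "B-lipschitz_on {0..1} (\<lambda>t. W a (mix t f g))"
  proof (rule lipschitz_onI)
    fix s t :: real assume s: "s \<in> {0..1}" and t: "t \<in> {0..1}"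
    have ms: "mix s f g \<in> F" "mix t f g \<in> F" using mix_F[OF f g] s t by auto
    have 1: "\<bar>mC (mix s f g) - mC (mix t f g)\<bar> \<le> B * \<bar>s - t\<bar>"
      unfolding mC_def'
    proof (rule Inf_lip[OF CDne(1) bddC[OF ms(1)] bddC[OF ms(2)]])
      fix p assume "p \<in> C"
      then have "p \<in> fa_probs Sig" using CP by blast
      then show "\<bar>EU u p (mix s f g) - EU u p (mix t f g)\<bar> \<le> B * \<bar>s - t\<bar>" using B(2) s t by blast
    qed
    have 2: "\<bar>MD (mix s f g) - MD (mix t f g)\<bar> \<le> B * \<bar>s - t\<bar>"
      unfolding MD_def'
    proof (rule Sup_lip[OF CDne(2) bddD[OF ms(1)] bddD[OF ms(2)]])
      fix p assume "p \<in> D"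
      then have "p \<in> fa_probs Sig" using DP by blast
      then show "\<bar>EU u p (mix s f g) - EU u p (mix t f g)\<bar> \<le> B * \<bar>s - t\<bar>" using B(2) s t by blast
    qed
    define A where "A = mC (mix s f g) - mC (mix t f g)"
    define Bm where "Bm = MD (mix s f g) - MD (mix t f g)"
    have "W a (mix s f g) - W a (mix t f g) = a * A + (1 - a) * Bm"
      unfolding W_def A_def Bm_def by (simp add: algebra_simps)
    moreover have "\<bar>a * A + (1 - a) * Bm\<bar> \<le> \<bar>a * A\<bar> + \<bar>(1 - a) * Bm\<bar>"
      by (rule abs_triangle_ineq)
    moreover have "\<bar>a * A\<bar> = a * \<bar>A\<bar>" "\<bar>(1 - a) * Bm\<bar> = (1 - a) * \<bar>Bm\<bar>"
      using a by (simp_all add: abs_mult)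
    moreover have "a * \<bar>A\<bar> \<le> a * (B * \<bar>s - t\<bar>)" using mult_left_mono[OF 1, of a] a unfolding A_def by simp
    moreover have "(1 - a) * \<bar>Bm\<bar> \<le> (1 - a) * (B * \<bar>s - t\<bar>)" using mult_left_mono[OF 2, of "1 - a"] a unfolding Bm_def by simp
    moreover have "a * (B * \<bar>s - t\<bar>) + (1 - a) * (B * \<bar>s - t\<bar>) = B * \<bar>s - t\<bar>" by (simp add: algebra_simps)
    ultimately have "\<bar>W a (mix s f g) - W a (mix t f g)\<bar> \<le> B * \<bar>s - t\<bar>" by linarith
    then show "dist (W a (mix s f g)) (W a (mix t f g)) \<le> B * dist s t" by (simp add: dist_real_def)
  qed (rule B(1))
  then show ?thesis by (rule lipschitz_on_continuous_on)
qed

lemma ii_to_i: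
  assumes a: "0 \<le> a" "a \<le> 1"
    and rep: "\<And>f g. f \<in> F \<Longrightarrow> g \<in> F \<Longrightarrow> Rs f g \<longleftrightarrow> W a g < W a f"
  shows "invariant_biseparable Sig X Rs"
  unfolding invariant_biseparable_def Let_def
proof (intro conjI ballI allI impI)
  show "\<not> Rs g f" if "f \<in> F" "g \<in> F" "Rs f g" for f g using rep[OF that(1,2)] rep[OF that(2,1)] that(3) by simp
  show "rel_complete Rs F" unfolding rel_complete_def rel_equiv_def
  proof (intro ballI)
    fix f g assume fg: "f \<in> F" "g \<in> F"
    show "Rs f g \<or> Rs g f \<or> (\<forall>h\<in>F. (Rs f h = Rs g h) \<and> (Rs h f = Rs h g))"
    proof (cases "W a f = W a g")
      case True
      have "\<forall>h\<in>F. (Rs f h = Rs g h) \<and> (Rs h f = Rs h g)"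
      proof
        fix h assume h: "h \<in> F"
        show "(Rs f h = Rs g h) \<and> (Rs h f = Rs h g)"
          using rep[OF fg(1) h] rep[OF fg(2) h] rep[OF h fg(1)] rep[OF h fg(2)] True by simp
      qed
      then show ?thesis by blast
    next
      case False
      then have "W a g < W a f \<or> W a f < W a g" by linarith
      then show ?thesis using rep[OF fg] rep[OF fg(2,1)] by blast
    qed
  qed
  show "\<not> Rs f h" if "f \<in> F" "g \<in> F" "h \<in> F" "\<not> Rs f g \<and> \<not> Rs g h" for f g h
  proof -
    have "\<not> W a g < W a f" "\<not> W a h < W a g" using that rep by auto
    then show ?thesis using rep[OF that(1,3)] by linarith
  qed
  fix f g h assume f: "f \<in> F" and g: "g \<in> F" and h: "h \<in> F"
  have ct: "continuous_on {0..1} (\<lambda>t. W a (mix t f g))" by (rule W_cont[OF f g a])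
  have mF: "t \<in> {0..1} \<Longrightarrow> mix t f g \<in> F" for t using mix_F[OF f g] by auto
  have e1: "{t \<in> {0..1::real}. Rs (mix t f g) h} = {0..1} \<inter> (\<lambda>t. W a (mix t f g)) -` {W a h<..}"
    using rep[OF mF h] by auto
  have e2: "{t \<in> {0..1::real}. Rs h (mix t f g)} = {0..1} \<inter> (\<lambda>t. W a (mix t f g)) -` {..<W a h}"
    using rep[OF h mF] by auto
  show "openin (top_of_set {0..1}) {t \<in> {0..1::real}. Rs (mix t f g) h}"
    unfolding e1 by (rule continuous_openin_preimage_gen[OF ct]) simp
  show "openin (top_of_set {0..1}) {t \<in> {0..1::real}. Rs h (mix t f g)}"
    unfolding e2 by (rule continuous_openin_preimage_gen[OF ct]) simp
next
  fix f g x and b :: real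
  assume f: "f \<in> F" and g: "g \<in> F" and x: "x \<in> X" and b: "0 < b \<and> b < 1"
  have mf: "mix b f (\<lambda>_. x) \<in> F" "mix b g (\<lambda>_. x) \<in> F"
    using mix_F[OF f cst_F[OF x]] mix_F[OF g cst_F[OF x]] b by auto
  have "Rs (mix b f (\<lambda>_. x)) (mix b g (\<lambda>_. x)) \<longleftrightarrow> b * W a g < b * W a f"
    using rep[OF mf] W_mixc[OF f x, of b a] W_mixc[OF g x, of b a] b by simp
  also have "\<dots> \<longleftrightarrow> W a g < W a f" using b by simp
  finally show "Rs f g = Rs (mix b f (\<lambda>_. x)) (mix b g (\<lambda>_. x))" using rep[OF f g] by simp
next
  fix f g assume f: "f \<in> F" and g: "g \<in> F" and all: "\<forall>s. Rs (\<lambda>_. f s) (\<lambda>_. g s)"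
  have "u (g s) < u (f s)" for s
  proof -
    have "Rs (\<lambda>_. f s) (\<lambda>_. g s)" using all by blast
    then show ?thesis using rep[OF cst_F[OF Fval[OF f]] cst_F[OF Fval[OF g]]]
      W_cst[OF Fval[OF f]] W_cst[OF Fval[OF g]] by simp
  qed
  then have lt: "mC g < mC f" "MD g < MD f" using mM_mono[OF f g] by auto
  have "a * mC g \<le> a * mC f" "(1 - a) * MD g \<le> (1 - a) * MD f"
    using lt a by (auto intro: mult_left_mono)
  moreover have "a * mC g < a * mC f \<or> (1 - a) * MD g < (1 - a) * MD f"
    using lt a by (cases "a = 0") auto
  ultimately have "W a g < W a f" unfolding W_def by linarith
  then show "Rs f g" using rep[OF f g] by simp
qed

lemma rep_W_eq:
  assumes a: "0 \<le> a" "a \<le> 1" and b: "0 \<le> b" "b \<le> 1"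
    and repa: "\<forall>f\<in>F. \<forall>g\<in>F. Rs f g \<longleftrightarrow> W a g < W a f"
    and repb: "\<forall>f\<in>F. \<forall>g\<in>F. Rs f g \<longleftrightarrow> W b g < W b f"
    and f: "f \<in> F"
  shows "W a f = W b f"
proof -
  obtain x where x: "x \<in> X" "u x = W a f" using W_in[OF f a] by blast
  have c: "(\<lambda>_. x) \<in> F" using cst_F[OF x(1)] .
  have "\<not> Rs f (\<lambda>_. x)" "\<not> Rs (\<lambda>_. x) f" using repa f c W_cst[OF x(1)] x by auto
  then have "\<not> u x < W b f" "\<not> W b f < u x" using repb f c W_cst[OF x(1)] by auto
  then show ?thesis using x by simp
qed

lemma rep_uniq:
  assumes a: "0 \<le> a" "a \<le> 1" and b: "0 \<le> b" "b \<le> 1"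
    and repa: "\<forall>f\<in>F. \<forall>g\<in>F. Rs f g \<longleftrightarrow> W a g < W a f"
    and repb: "\<forall>f\<in>F. \<forall>g\<in>F. Rs f g \<longleftrightarrow> W b g < W b f"
    and Rrep: "\<forall>f\<in>F. \<forall>g\<in>F. R f g \<longleftrightarrow> mC g < mC f \<and> MD g < MD f"
    and ninc: "\<not> rel_complete R F"
  shows "a = b"
proof (rule ccontr)
  assume ne: "a \<noteq> b"
  have eq: "mC f = MD f" if f: "f \<in> F" for f
  proof -
    have "W a f = W b f" by (rule rep_W_eq[OF a b repa repb f])
    then have "(a - b) * (mC f - MD f) = 0" unfolding W_def by (simp add: algebra_simps)
    then show ?thesis using ne by simp
  qed
  have "rel_complete R F" unfolding rel_complete_def rel_equiv_def
  proof (intro ballI)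
    fix f g assume fg: "f \<in> F" "g \<in> F"
    show "R f g \<or> R g f \<or> (\<forall>h\<in>F. (R f h = R g h) \<and> (R h f = R h g))"
    proof (cases "mC f = mC g")
      case True then show ?thesis using Rrep fg eq by auto
    next
      case False then show ?thesis using Rrep fg eq by (metis linorder_neqE_linordered_idom)
    qed
  qed
  then show False using ninc by simp
qed

end



lemma open_near:
  assumes "openin (top_of_set {0..1::real}) A" "t \<in> A"
  shows "\<exists>e>0. \<forall>s\<in>{0..1}. \<bar>s - t\<bar> < e \<longrightarrow> s \<in> A"
  using assms unfolding openin_euclidean_subtopology_iff dist_real_def by blast

lemma near1:
  assumes "openin (top_of_set {0..1::real}) A" "1 \<in> A"
  shows "\<exists>s. 0 < s \<and> s < 1 \<and> s \<in> A"
proof -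
  obtain e where e: "e > 0" "\<forall>s\<in>{0..1}. \<bar>s - 1\<bar> < e \<longrightarrow> s \<in> A" using open_near[OF assms] by blast
  define s where "s = 1 - min (1/2) (e/2)"
  have "0 < s" "s < 1" "s \<in> {0..1}" "\<bar>s - 1\<bar> < e" unfolding s_def using e(1) by auto
  then show ?thesis using e(2) by blast
qed

lemma near0:
  assumes "openin (top_of_set {0..1::real}) A" "0 \<in> A"
  shows "\<exists>s. 0 < s \<and> s < 1 \<and> s \<in> A"
proof -
  obtain e where e: "e > 0" "\<forall>s\<in>{0..1}. \<bar>s - 0\<bar> < e \<longrightarrow> s \<in> A" using open_near[OF assms] by blast
  define s where "s = min (1/2) (e/2)"
  have "0 < s" "s < 1" "s \<in> {0..1}" "\<bar>s - 0\<bar> < e" unfolding s_def using e(1) by auto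
  then show ?thesis using e(2) by blast
qed

locale hp_ext = hp_setup Sig X u C D
  for Sig :: "'a set set" and X :: "'b::real_vector set" and u :: "'b \<Rightarrow> real"
    and C D :: "('a set \<Rightarrow> real) set" +
  fixes Rs :: "('a \<Rightarrow> 'b) \<Rightarrow> ('a \<Rightarrow> 'b) \<Rightarrow> bool"
  assumes IB: "invariant_biseparable Sig X Rs"
    and ext: "\<And>f g. f \<in> simple_acts Sig X \<Longrightarrow> g \<in> simple_acts Sig X \<Longrightarrow>
       minEU u C g < minEU u C f \<Longrightarrow> maxEU u D g < maxEU u D f \<Longrightarrow> Rs f g"
begin

lemma asym: "f \<in> F \<Longrightarrow> g \<in> F \<Longrightarrow> Rs f g \<Longrightarrow> \<not> Rs g f"
  using IB unfolding invariant_biseparable_def Let_def by blast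
lemma negtr: "f \<in> F \<Longrightarrow> g \<in> F \<Longrightarrow> h \<in> F \<Longrightarrow> \<not> Rs f g \<Longrightarrow> \<not> Rs g h \<Longrightarrow> \<not> Rs f h"
  using IB unfolding invariant_biseparable_def Let_def by blast
lemma cont1: "f \<in> F \<Longrightarrow> g \<in> F \<Longrightarrow> h \<in> F \<Longrightarrow>
    openin (top_of_set {0..1}) {a\<in>{0..1::real}. Rs (mix a f g) h}"
  using IB unfolding invariant_biseparable_def Let_def by blast
lemma cont2: "f \<in> F \<Longrightarrow> g \<in> F \<Longrightarrow> h \<in> F \<Longrightarrow>
    openin (top_of_set {0..1}) {a\<in>{0..1::real}. Rs h (mix a f g)}"
  using IB unfolding invariant_biseparable_def Let_def by blast
lemma ci: "f \<in> F \<Longrightarrow> g \<in> F \<Longrightarrow> x \<in> X \<Longrightarrow> 0 < a \<Longrightarrow> a < 1 \<Longrightarrow>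
    Rs f g \<longleftrightarrow> Rs (mix a f (\<lambda>_. x)) (mix a g (\<lambda>_. x))"
  using IB unfolding invariant_biseparable_def Let_def by blast

lemma trans: "f \<in> F \<Longrightarrow> g \<in> F \<Longrightarrow> h \<in> F \<Longrightarrow> Rs f g \<Longrightarrow> Rs g h \<Longrightarrow> Rs f h"
  using negtr asym by blast

lemma ext_cst:
  assumes "f \<in> F" "x \<in> X" "u x < mC f" "u x < MD f"
  shows "Rs f (\<lambda>_. x)"
  using ext[OF assms(1) cst_F[OF assms(2)]] assms m_cst M_cst by simp

lemma ext_cst2:
  assumes "f \<in> F" "x \<in> X" "mC f < u x" "MD f < u x"
  shows "Rs (\<lambda>_. x) f"
  using ext[OF cst_F[OF assms(2)] assms(1)] assms m_cst M_cst by simp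

lemma cst_rel:
  assumes x: "x \<in> X" and y: "y \<in> X"
  shows "Rs (\<lambda>_. x) (\<lambda>_. y) \<longleftrightarrow> u y < u x"
proof
  assume "u y < u x"
  then show "Rs (\<lambda>_. x) (\<lambda>_. y)" using ext_cst[OF cst_F[OF x] y] m_cst[OF x] M_cst[OF x] by simp
next
  assume R: "Rs (\<lambda>_. x) (\<lambda>_. y)"
  show "u y < u x"
  proof (rule ccontr)
    assume "\<not> u y < u x"
    then consider "u x < u y" | "u x = u y" by linarith
    then show False
    proof cases
      case 1
      then have "Rs (\<lambda>_. y) (\<lambda>_. x)" using ext_cst[OF cst_F[OF y] x] m_cst[OF y] M_cst[OF y] by simp
      then show False using asym[OF cst_F[OF x] cst_F[OF y] R] by simp
    next
      case 2
      obtain z1 z2 where z: "z1 \<in> X" "z2 \<in> X" "u z1 < u z2" using ncst2 by blast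
      have "(\<exists>z\<in>X. u z < u x) \<or> (\<exists>z\<in>X. u x < u z)" using z by (meson not_less less_le_trans)
      then show False
      proof
        assume "\<exists>z\<in>X. u z < u x"
        then obtain z where zz: "z \<in> X" "u z < u x" by blast
        have "1 \<in> {a\<in>{0..1::real}. Rs (mix a (\<lambda>_. x) (\<lambda>_. z)) (\<lambda>_. y)}" using R by (simp add: mix1)
        then obtain s where s: "0 < s" "s < 1" "Rs (mix s (\<lambda>_. x) (\<lambda>_. z)) (\<lambda>_. y)"
          using near1[OF cont1[OF cst_F[OF x] cst_F[OF zz(1)] cst_F[OF y]]] by blast
        let ?w = "s *\<^sub>R x + (1 - s) *\<^sub>R z"
        have w: "?w \<in> X" "u ?w = s * u x + (1 - s) * u z" using u_mix[OF x zz(1), of s] s by auto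
        have "(1 - s) * u z < (1 - s) * u x" using zz(2) s by (intro mult_strict_left_mono) auto
        moreover have "s * u x + (1 - s) * u x = u x" by (simp add: algebra_simps)
        ultimately have "u ?w < u y" using w(2) 2 by linarith
        then have "Rs (\<lambda>_. y) (\<lambda>_. ?w)" using ext_cst[OF cst_F[OF y] w(1)] m_cst[OF y] M_cst[OF y] by simp
        then show False using asym[OF cst_F[OF w(1)] cst_F[OF y]] s(3) by (simp add: mix_cst)
      next
        assume "\<exists>z\<in>X. u x < u z"
        then obtain z where zz: "z \<in> X" "u x < u z" by blast
        have "1 \<in> {a\<in>{0..1::real}. Rs (\<lambda>_. x) (mix a (\<lambda>_. y) (\<lambda>_. z))}" using R by (simp add: mix1)
        then obtain s where s: "0 < s" "s < 1" "Rs (\<lambda>_. x) (mix s (\<lambda>_. y) (\<lambda>_. z))"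
          using near1[OF cont2[OF cst_F[OF y] cst_F[OF zz(1)] cst_F[OF x]]] by blast
        let ?w = "s *\<^sub>R y + (1 - s) *\<^sub>R z"
        have w: "?w \<in> X" "u ?w = s * u y + (1 - s) * u z" using u_mix[OF y zz(1), of s] s by auto
        have "(1 - s) * u y < (1 - s) * u z" using zz(2) 2 s by (intro mult_strict_left_mono) auto
        moreover have "s * u y + (1 - s) * u y = u y" by (simp add: algebra_simps)
        ultimately have "u x < u ?w" using w(2) 2 by linarith
        then have "Rs (\<lambda>_. ?w) (\<lambda>_. x)" using ext_cst[OF cst_F[OF w(1)] x] m_cst[OF w(1)] M_cst[OF w(1)] by simp
        then show False using asym[OF cst_F[OF w(1)] cst_F[OF x]] s(3) by (simp add: mix_cst)
      qed
    qed
  qed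
qed

lemma cst_eq:
  assumes x: "x \<in> X" and y: "y \<in> X" and eq: "u x = u y" and h: "h \<in> F"
  shows "Rs h (\<lambda>_. x) \<longleftrightarrow> Rs h (\<lambda>_. y)" "Rs (\<lambda>_. x) h \<longleftrightarrow> Rs (\<lambda>_. y) h"
proof -
  have n: "\<not> Rs (\<lambda>_. x) (\<lambda>_. y)" "\<not> Rs (\<lambda>_. y) (\<lambda>_. x)" using cst_rel[OF x y] cst_rel[OF y x] eq by auto
  show "Rs h (\<lambda>_. x) \<longleftrightarrow> Rs h (\<lambda>_. y)"
    using negtr[OF h cst_F[OF x] cst_F[OF y]] negtr[OF h cst_F[OF y] cst_F[OF x]] n by blast
  show "Rs (\<lambda>_. x) h \<longleftrightarrow> Rs (\<lambda>_. y) h"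
    using negtr[OF cst_F[OF x] cst_F[OF y] h] negtr[OF cst_F[OF y] cst_F[OF x] h] n by blast
qed

lemma mixc_bounds:
  assumes f: "f \<in> F" and z: "z \<in> X" and s: "0 < s" "s < 1"
  shows "mix s f (\<lambda>_. z) \<in> F"
    "mC (mix s f (\<lambda>_. z)) = s * mC f + (1 - s) * u z"
    "MD (mix s f (\<lambda>_. z)) = s * MD f + (1 - s) * u z"
  using mix_F[OF f cst_F[OF z]] m_mixc[OF f z] M_mixc[OF f z] s by auto

lemma claim1:
  assumes f: "f \<in> F" and xm: "xm \<in> X" "u xm = mC f"
  shows "\<not> Rs (\<lambda>_. xm) f"
proof
  assume R: "Rs (\<lambda>_. xm) f"
  have le: "mC f \<le> MD f" by (rule m_le_M[OF f])
  show False
  proof (cases "\<exists>y\<in>X. u y < mC f")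
    case True
    then obtain y where y: "y \<in> X" "u y < mC f" by blast
    have "1 \<in> {a\<in>{0..1::real}. Rs (mix a (\<lambda>_. xm) (\<lambda>_. y)) f}" using R by (simp add: mix1)
    then obtain s where s: "0 < s" "s < 1" "Rs (mix s (\<lambda>_. xm) (\<lambda>_. y)) f"
      using near1[OF cont1[OF cst_F[OF xm(1)] cst_F[OF y(1)] f]] by blast
    let ?w = "s *\<^sub>R xm + (1 - s) *\<^sub>R y"
    have w: "?w \<in> X" "u ?w = s * u xm + (1 - s) * u y" using u_mix[OF xm(1) y(1), of s] s by auto
    have "(1 - s) * u y < (1 - s) * mC f" using y(2) s by (intro mult_strict_left_mono) auto
    moreover have "s * mC f + (1 - s) * mC f = mC f" by (simp add: algebra_simps)
    ultimately have "u ?w < mC f" using w(2)[unfolded xm(2)] by linarith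
    then have "Rs f (\<lambda>_. ?w)" using ext_cst[OF f w(1)] le by simp
    then show False using asym[OF cst_F[OF w(1)] f] s(3) by (simp add: mix_cst)
  next
    case False
    obtain z1 z2 where z: "z1 \<in> X" "z2 \<in> X" "u z1 < u z2" using ncst2 by blast
    have zz: "z2 \<in> X" "mC f < u z2" using False z by force+
    have "1 \<in> {a\<in>{0..1::real}. Rs (\<lambda>_. xm) (mix a f (\<lambda>_. z2))}" using R by (simp add: mix1)
    then obtain s where s: "0 < s" "s < 1" "Rs (\<lambda>_. xm) (mix s f (\<lambda>_. z2))"
      using near1[OF cont2[OF f cst_F[OF zz(1)] cst_F[OF xm(1)]]] by blast
    note mb = mixc_bounds[OF f zz(1) s(1,2)]
    have "(1 - s) * mC f < (1 - s) * u z2" using zz(2) s by (intro mult_strict_left_mono) auto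
    moreover have "s * mC f \<le> s * MD f" using le s by (intro mult_left_mono) auto
    moreover have "s * mC f + (1 - s) * mC f = mC f" by (simp add: algebra_simps)
    ultimately have "u xm < mC (mix s f (\<lambda>_. z2))" "u xm < MD (mix s f (\<lambda>_. z2))"
      using mb(2,3) xm(2) by linarith+
    then have "Rs (mix s f (\<lambda>_. z2)) (\<lambda>_. xm)" using ext_cst[OF mb(1) xm(1)] by simp
    then show False using asym[OF cst_F[OF xm(1)] mb(1)] s(3) by simp
  qed
qed

lemma claim2:
  assumes f: "f \<in> F" and xM: "xM \<in> X" "u xM = MD f"
  shows "\<not> Rs f (\<lambda>_. xM)"
proof
  assume R: "Rs f (\<lambda>_. xM)"
  have le: "mC f \<le> MD f" by (rule m_le_M[OF f])
  show False
  proof (cases "\<exists>y\<in>X. MD f < u y")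
    case True
    then obtain y where y: "y \<in> X" "MD f < u y" by blast
    have "1 \<in> {a\<in>{0..1::real}. Rs f (mix a (\<lambda>_. xM) (\<lambda>_. y))}" using R by (simp add: mix1)
    then obtain s where s: "0 < s" "s < 1" "Rs f (mix s (\<lambda>_. xM) (\<lambda>_. y))"
      using near1[OF cont2[OF cst_F[OF xM(1)] cst_F[OF y(1)] f]] by blast
    let ?w = "s *\<^sub>R xM + (1 - s) *\<^sub>R y"
    have w: "?w \<in> X" "u ?w = s * u xM + (1 - s) * u y" using u_mix[OF xM(1) y(1), of s] s by auto
    have "(1 - s) * MD f < (1 - s) * u y" using y(2) s by (intro mult_strict_left_mono) auto
    moreover have "s * MD f + (1 - s) * MD f = MD f" by (simp add: algebra_simps)
    ultimately have "MD f < u ?w" using w(2)[unfolded xM(2)] by linarith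
    then have "Rs (\<lambda>_. ?w) f" using ext_cst2[OF f w(1)] le by simp
    then show False using asym[OF f cst_F[OF w(1)]] s(3) by (simp add: mix_cst)
  next
    case False
    obtain z1 z2 where z: "z1 \<in> X" "z2 \<in> X" "u z1 < u z2" using ncst2 by blast
    have zz: "z1 \<in> X" "u z1 < MD f" using False z by force+
    have "1 \<in> {a\<in>{0..1::real}. Rs (mix a f (\<lambda>_. z1)) (\<lambda>_. xM)}" using R by (simp add: mix1)
    then obtain s where s: "0 < s" "s < 1" "Rs (mix s f (\<lambda>_. z1)) (\<lambda>_. xM)"
      using near1[OF cont1[OF f cst_F[OF zz(1)] cst_F[OF xM(1)]]] by blast
    note mb = mixc_bounds[OF f zz(1) s(1,2)]
    have "(1 - s) * u z1 < (1 - s) * MD f" using zz(2) s by (intro mult_strict_left_mono) auto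
    moreover have "s * mC f \<le> s * MD f" using le s by (intro mult_left_mono) auto
    moreover have "s * MD f + (1 - s) * MD f = MD f" by (simp add: algebra_simps)
    ultimately have "mC (mix s f (\<lambda>_. z1)) < u xM" "MD (mix s f (\<lambda>_. z1)) < u xM"
      using mb(2,3) xM(2) by linarith+
    then have "Rs (\<lambda>_. xM) (mix s f (\<lambda>_. z1))" using ext_cst2[OF mb(1) xM(1)] by simp
    then show False using asym[OF mb(1) cst_F[OF xM(1)]] s(3) by simp
  qed
qed

lemma ce_exists:
  assumes f: "f \<in> F"
  shows "\<exists>x\<in>X. mC f \<le> u x \<and> u x \<le> MD f \<and> \<not> Rs f (\<lambda>_. x) \<and> \<not> Rs (\<lambda>_. x) f"
proof (rule ccontr)
  assume "\<not> ?thesis"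
  then have H: "\<And>x. x \<in> X \<Longrightarrow> mC f \<le> u x \<Longrightarrow> u x \<le> MD f \<Longrightarrow> Rs f (\<lambda>_. x) \<or> Rs (\<lambda>_. x) f" by blast
  have le: "mC f \<le> MD f" by (rule m_le_M[OF f])
  obtain xm where xm: "xm \<in> X" "u xm = mC f" using in_range[OF f] le by blast
  obtain xM where xM: "xM \<in> X" "u xM = MD f" using in_range[OF f] le by blast
  have Rm: "Rs f (\<lambda>_. xm)" using H[OF xm(1)] claim1[OF f xm] xm le by auto
  have RM: "Rs (\<lambda>_. xM) f" using H[OF xM(1)] claim2[OF f xM] xM le by auto
  define S where "S = {t. \<exists>x\<in>X. u x = t \<and> t \<le> MD f \<and> Rs f (\<lambda>_. x)}"
  have mS: "mC f \<in> S" unfolding S_def using xm Rm le by blast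
  have Sne: "S \<noteq> {}" using mS by blast
  have Sb: "bdd_above S" unfolding S_def bdd_above_def by blast
  define c where "c = Sup S"
  have c1: "mC f \<le> c" unfolding c_def using cSup_upper[OF mS Sb] .
  have c2: "c \<le> MD f" unfolding c_def by (rule cSup_least[OF Sne]) (auto simp: S_def)
  obtain xc where xc: "xc \<in> X" "u xc = c" using in_range[OF f c1 c2] by blast
  have "Rs f (\<lambda>_. xc) \<or> Rs (\<lambda>_. xc) f" using H[OF xc(1)] xc c1 c2 by simp
  then show False
  proof
    assume R: "Rs f (\<lambda>_. xc)"
    have cM: "c < MD f"
    proof (rule ccontr)
      assume "\<not> c < MD f"
      then have "u xc = u xM" using c2 xc xM by simp
      then have "Rs f (\<lambda>_. xM)" using cst_eq(1)[OF xc(1) xM(1) _ f] R by simp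
      then show False using asym[OF f cst_F[OF xM(1)]] RM by simp
    qed
    have "0 \<in> {a\<in>{0..1::real}. Rs f (mix a (\<lambda>_. xM) (\<lambda>_. xc))}" using R by (simp add: mix0)
    then obtain s where s: "0 < s" "s < 1" "Rs f (mix s (\<lambda>_. xM) (\<lambda>_. xc))"
      using near0[OF cont2[OF cst_F[OF xM(1)] cst_F[OF xc(1)] f]] by blast
    let ?w = "s *\<^sub>R xM + (1 - s) *\<^sub>R xc"
    have w: "?w \<in> X" "u ?w = s * u xM + (1 - s) * u xc" using u_mix[OF xM(1) xc(1), of s] s by auto
    have "s * c < s * MD f" using cM s by (intro mult_strict_left_mono) auto
    moreover have "s * MD f \<le> s * MD f + 0" by simp
    moreover have "s * c + (1 - s) * c = c" "s * MD f + (1 - s) * MD f = MD f" by (simp_all add: algebra_simps)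
    moreover have "(1 - s) * c \<le> (1 - s) * MD f" using c2 s by (intro mult_left_mono) auto
    ultimately have wc: "c < u ?w" "u ?w \<le> MD f" using w(2)[unfolded xM(2) xc(2)] by linarith+
    have "u ?w \<in> S" unfolding S_def using w(1) wc(2) s(3) by (auto simp: mix_cst)
    then have "u ?w \<le> c" unfolding c_def using cSup_upper[OF _ Sb] by blast
    then show False using wc by simp
  next
    assume R: "Rs (\<lambda>_. xc) f"
    have cm: "mC f < c"
    proof (rule ccontr)
      assume "\<not> mC f < c"
      then have "u xc = u xm" using c1 xc xm by simp
      then have "Rs (\<lambda>_. xm) f" using cst_eq(2)[OF xc(1) xm(1) _ f] R by simp
      then show False using claim1[OF f xm] by simp
    qed
    have "0 \<in> {a\<in>{0..1::real}. Rs (mix a (\<lambda>_. xm) (\<lambda>_. xc)) f}" using R by (simp add: mix0)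
    then obtain s where s: "0 < s" "s < 1" "Rs (mix s (\<lambda>_. xm) (\<lambda>_. xc)) f"
      using near0[OF cont1[OF cst_F[OF xm(1)] cst_F[OF xc(1)] f]] by blast
    let ?w = "s *\<^sub>R xm + (1 - s) *\<^sub>R xc"
    have w: "?w \<in> X" "u ?w = s * u xm + (1 - s) * u xc" using u_mix[OF xm(1) xc(1), of s] s by auto
    have "s * mC f < s * c" using cm s by (intro mult_strict_left_mono) auto
    moreover have "s * c + (1 - s) * c = c" by (simp add: algebra_simps)
    ultimately have wc: "u ?w < c" using w(2)[unfolded xm(2) xc(2)] by linarith
    then obtain t where t: "t \<in> S" "u ?w < t" using less_cSup_iff[OF Sne Sb] unfolding c_def by blast
    then obtain x' where x': "x' \<in> X" "u x' = t" "Rs f (\<lambda>_. x')" unfolding S_def by blast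
    have "Rs (\<lambda>_. x') (\<lambda>_. ?w)" using cst_rel[OF x'(1) w(1)] t x' by simp
    then have "Rs f (\<lambda>_. ?w)" using trans[OF f cst_F[OF x'(1)] cst_F[OF w(1)] x'(3)] by simp
    then show False using asym[OF f cst_F[OF w(1)]] s(3) by (simp add: mix_cst)
  qed
qed

definition Vp :: "('a \<Rightarrow> 'b) \<Rightarrow> real \<Rightarrow> bool" where
  "Vp f c \<longleftrightarrow> mC f \<le> c \<and> c \<le> MD f \<and>
     (\<forall>x\<in>X. (Rs f (\<lambda>_. x) \<longleftrightarrow> u x < c) \<and> (Rs (\<lambda>_. x) f \<longleftrightarrow> c < u x))"

definition V :: "('a \<Rightarrow> 'b) \<Rightarrow> real" where
  "V f = (SOME c. Vp f c)"

lemma Vp_ex: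
  assumes f: "f \<in> F"
  shows "\<exists>c. Vp f c"
proof -
  obtain x0 where x0: "x0 \<in> X" "mC f \<le> u x0" "u x0 \<le> MD f" "\<not> Rs f (\<lambda>_. x0)" "\<not> Rs (\<lambda>_. x0) f"
    using ce_exists[OF f] by blast
  have c0: "(\<lambda>_. x0) \<in> F" by (rule cst_F[OF x0(1)])
  have "(Rs f (\<lambda>_. x) \<longleftrightarrow> u x < u x0) \<and> (Rs (\<lambda>_. x) f \<longleftrightarrow> u x0 < u x)" if x: "x \<in> X" for x
  proof -
    have cx: "(\<lambda>_. x) \<in> F" by (rule cst_F[OF x])
    have a1: "Rs f (\<lambda>_. x)" if "u x < u x0"
      using negtr[OF c0 f cx] x0(5) cst_rel[OF x0(1) x] that by blast
    have a2: "u x < u x0" if "Rs f (\<lambda>_. x)"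
      using negtr[OF f c0 cx] x0(4) cst_rel[OF x0(1) x] that by force
    have a3: "Rs (\<lambda>_. x) f" if "u x0 < u x"
      using negtr[OF cx f c0] x0(4) cst_rel[OF x x0(1)] that by blast
    have a4: "u x0 < u x" if "Rs (\<lambda>_. x) f"
      using negtr[OF cx c0 f] x0(5) cst_rel[OF x x0(1)] that by force
    show ?thesis using a1 a2 a3 a4 by blast
  qed
  then have "Vp f (u x0)" unfolding Vp_def using x0 by blast
  then show ?thesis by blast
qed

lemma V_prop:
  assumes f: "f \<in> F"
  shows "mC f \<le> V f" "V f \<le> MD f"
    "\<And>x. x \<in> X \<Longrightarrow> Rs f (\<lambda>_. x) \<longleftrightarrow> u x < V f"
    "\<And>x. x \<in> X \<Longrightarrow> Rs (\<lambda>_. x) f \<longleftrightarrow> V f < u x"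
proof -
  have "Vp f (V f)" unfolding V_def using Vp_ex[OF f] by (rule someI_ex)
  then show "mC f \<le> V f" "V f \<le> MD f"
    "\<And>x. x \<in> X \<Longrightarrow> Rs f (\<lambda>_. x) \<longleftrightarrow> u x < V f"
    "\<And>x. x \<in> X \<Longrightarrow> Rs (\<lambda>_. x) f \<longleftrightarrow> V f < u x"
    unfolding Vp_def by blast+
qed

lemma V_rep:
  assumes f: "f \<in> F" and g: "g \<in> F"
  shows "Rs f g \<longleftrightarrow> V g < V f"
proof
  assume R: "Rs f g"
  obtain x where x: "x \<in> X" "u x = V f" using in_range[OF f V_prop(1,2)[OF f]] by blast
  have "\<not> Rs f (\<lambda>_. x)" using V_prop(3)[OF f x(1)] x(2) by simp
  then have "Rs (\<lambda>_. x) g" using negtr[OF f cst_F[OF x(1)] g] R by blast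
  then show "V g < V f" using V_prop(4)[OF g x(1)] x(2) by simp
next
  assume lt: "V g < V f"
  obtain x1 x2 where xs: "x1 \<in> X" "x2 \<in> X" "u x1 \<le> mC g" "MD f \<le> u x2"
    using mM_bounds[OF g] mM_bounds[OF f] by blast
  have "u x1 \<le> V g" using xs(3) V_prop(1)[OF g] by linarith
  then have i1: "u x1 \<le> (V f + V g) / 2" using lt by (simp add: field_simps)
  have "V f \<le> u x2" using xs(4) V_prop(2)[OF f] by linarith
  then have i2: "(V f + V g) / 2 \<le> u x2" using lt by (simp add: field_simps)
  from i1 i2 obtain x where x: "x \<in> X" "u x = (V f + V g) / 2" using interval[OF xs(1,2)] by blast
  have "Rs f (\<lambda>_. x)" using V_prop(3)[OF f x(1)] x(2) lt by simp
  moreover have "Rs (\<lambda>_. x) g" using V_prop(4)[OF g x(1)] x(2) lt by simp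
  ultimately show "Rs f g" using trans[OF f cst_F[OF x(1)] g] by blast
qed

lemma V_mixc:
  assumes f: "f \<in> F" and x: "x \<in> X" and b: "0 < b" "b < 1"
  shows "V (mix b f (\<lambda>_. x)) = b * V f + (1 - b) * u x"
proof -
  obtain y where y: "y \<in> X" "u y = V f" using in_range[OF f V_prop(1,2)[OF f]] by blast
  have n: "\<not> Rs f (\<lambda>_. y)" "\<not> Rs (\<lambda>_. y) f" using V_prop(3,4)[OF f y(1)] y(2) by auto
  have g: "mix b f (\<lambda>_. x) \<in> F" using mix_F[OF f cst_F[OF x]] b by simp
  let ?w = "b *\<^sub>R y + (1 - b) *\<^sub>R x"
  have w: "?w \<in> X" "u ?w = b * u y + (1 - b) * u x" using u_mix[OF y(1) x, of b] b by auto
  have "\<not> Rs (mix b f (\<lambda>_. x)) (\<lambda>_. ?w)" "\<not> Rs (\<lambda>_. ?w) (mix b f (\<lambda>_. x))"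
    using n ci[OF f cst_F[OF y(1)] x b] ci[OF cst_F[OF y(1)] f x b] by (simp_all add: mix_cst)
  then have "\<not> u ?w < V (mix b f (\<lambda>_. x))" "\<not> V (mix b f (\<lambda>_. x)) < u ?w"
    using V_prop(3,4)[OF g w(1)] by auto
  then show ?thesis using w(2) y(2) by simp
qed

lemma V_cst: "x \<in> X \<Longrightarrow> V (\<lambda>_. x) = u x"
  using V_prop(1,2)[OF cst_F] m_cst M_cst by (metis order_antisym)

lemma V_mon:
  assumes f: "f \<in> F" and g: "g \<in> F" and m: "mC g \<le> mC f" and M: "MD g \<le> MD f"
  shows "V g \<le> V f"
proof (rule ccontr)
  assume "\<not> V g \<le> V f"
  then have dpos: "V g - V f > 0" by simp
  define d where "d = V g - V f"
  obtain z1 z2 where z: "z1 \<in> X" "z2 \<in> X" "u z1 < u z2" using ncst2 by blast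
  define e where "e = u z2 - u z1"
  have epos: "e > 0" using z unfolding e_def by simp
  have d0: "d > 0" using dpos unfolding d_def .
  define b where "b = 2 * e / (2 * e + d)"
  have b: "0 < b" "b < 1" unfolding b_def using epos d0 by (auto simp: field_simps)
  note f' = mixc_bounds[OF f z(2) b] and g' = mixc_bounds[OF g z(1) b]
  have "(1 - b) * u z1 < (1 - b) * u z2" using z(3) b by (intro mult_strict_left_mono) auto
  moreover have "b * mC g \<le> b * mC f" "b * MD g \<le> b * MD f" using m M b by (auto intro: mult_left_mono)
  ultimately have "mC (mix b g (\<lambda>_. z1)) < mC (mix b f (\<lambda>_. z2))" "MD (mix b g (\<lambda>_. z1)) < MD (mix b f (\<lambda>_. z2))"
    using f'(2,3) g'(2,3) by linarith+
  then have "Rs (mix b f (\<lambda>_. z2)) (mix b g (\<lambda>_. z1))" using ext[OF f'(1) g'(1)] by simp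
  then have "V (mix b g (\<lambda>_. z1)) < V (mix b f (\<lambda>_. z2))" using V_rep[OF f'(1) g'(1)] by simp
  then have "b * V g + (1 - b) * u z1 < b * V f + (1 - b) * u z2"
    using V_mixc[OF f z(2) b] V_mixc[OF g z(1) b] by simp
  then have lt: "b * d < (1 - b) * e" unfolding d_def e_def by (simp add: algebra_simps)
  have "b * d = 2 * e * d / (2 * e + d)" "(1 - b) * e = d * e / (2 * e + d)"
    unfolding b_def using epos d0 by (auto simp: field_simps)
  moreover have "d * e / (2 * e + d) < 2 * e * d / (2 * e + d)"
    using epos d0 by (intro divide_strict_right_mono) auto
  ultimately show False using lt by simp
qed

lemma V_eq:
  assumes "f \<in> F" "g \<in> F" "mC g = mC f" "MD g = MD f"
  shows "V g = V f"
  using V_mon[OF assms(1,2)] V_mon[OF assms(2,1)] assms(3,4) by (simp add: order_antisym)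

lemma match:
  fixes wf wg Mf Mg :: real
  assumes wf: "0 < wf" and wg: "0 < wg"
  shows "\<exists>a b x y. 0 < a \<and> a < 1 \<and> 0 < b \<and> b < 1 \<and> x \<in> X \<and> y \<in> X \<and>
     a * wf = b * wg \<and> a * Mf + (1 - a) * u x = b * Mg + (1 - b) * u y"
proof -
  obtain z1 z2 where z: "z1 \<in> X" "z2 \<in> X" "u z1 < u z2" using ncst2 by blast
  define t0 where "t0 = (u z1 + u z2) / 2"
  define r where "r = (u z2 - u z1) / 2"
  have r: "r > 0" unfolding r_def using z by simp
  have t0r: "u z1 = t0 - r" "u z2 = t0 + r" unfolding t0_def r_def by (simp_all add: field_simps)
  obtain x0 where x0: "x0 \<in> X" "u x0 = t0" using interval[OF z(1,2), of t0] t0r r by auto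
  define K where "K = \<bar>Mf - t0\<bar> / wf + \<bar>Mg - t0\<bar> / wg"
  have K: "K \<ge> 0" unfolding K_def using wf wg by simp
  define e where "e = min (min (wf / 2) (wg / 2)) (r / (2 * K + 1))"
  have e0: "0 < e" unfolding e_def using wf wg r K by auto
  have e1: "e \<le> wf / 2" "e \<le> wg / 2" "e \<le> r / (2 * K + 1)"
    unfolding e_def by (rule order_trans[OF min.cobounded1 min.cobounded1],
      rule order_trans[OF min.cobounded1 min.cobounded2], rule min.cobounded2)
  note e = e0 e1
  define a where "a = e / wf"
  define b where "b = e / wg"
  have a: "0 < a" "a \<le> 1/2" unfolding a_def using e wf by (auto simp: field_simps)
  have b: "0 < b" "b \<le> 1/2" unfolding b_def using e wg by (auto simp: field_simps)
  have ab: "a * wf = e" "b * wg = e" unfolding a_def b_def using wf wg by auto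
  define num where "num = a * (Mf - t0) - b * (Mg - t0)"
  define T where "T = t0 + num / (1 - b)"
  have "\<bar>num\<bar> \<le> \<bar>a * (Mf - t0)\<bar> + \<bar>b * (Mg - t0)\<bar>" unfolding num_def by (rule abs_triangle_ineq4)
  also have "\<bar>a * (Mf - t0)\<bar> = e * (\<bar>Mf - t0\<bar> / wf)" unfolding a_def using e wf by (simp add: abs_mult)
  also have "\<bar>b * (Mg - t0)\<bar> = e * (\<bar>Mg - t0\<bar> / wg)" unfolding b_def using e wg by (simp add: abs_mult)
  finally have n1: "\<bar>num\<bar> \<le> e * K" unfolding K_def by (simp add: distrib_left)
  have "e * K \<le> r / (2 * K + 1) * K" using e(4) K by (rule mult_right_mono)
  also have "r / (2 * K + 1) * K \<le> r / 2" using r K by (simp add: field_simps)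
  finally have n2: "\<bar>num\<bar> \<le> r / 2" using n1 by linarith
  have "\<bar>num / (1 - b)\<bar> = \<bar>num\<bar> / (1 - b)" using b by simp
  also have "\<dots> \<le> 2 * \<bar>num\<bar>"
  proof -
    have "\<bar>num\<bar> * 1 \<le> \<bar>num\<bar> * (2 * (1 - b))" using b by (intro mult_left_mono) auto
    then show ?thesis using b by (simp add: pos_divide_le_eq algebra_simps)
  qed
  finally have nb: "\<bar>num / (1 - b)\<bar> \<le> r" using n2 by linarith
  have T1: "u z1 \<le> T" unfolding T_def t0r using abs_le_D2[OF nb] by linarith
  have T2: "T \<le> u z2" unfolding T_def t0r using abs_le_D1[OF nb] by linarith
  note T = T1 T2
  obtain y where y: "y \<in> X" "u y = T" using interval[OF z(1,2) T] by blast
  have "(1 - b) * T = (1 - b) * t0 + num" unfolding T_def using b by (simp add: field_simps)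
  then have "b * Mg + (1 - b) * u y = a * Mf + (1 - a) * u x0"
    unfolding y(2) x0(2) num_def by (simp add: algebra_simps)
  moreover have "a * wf = b * wg" using ab by simp
  moreover have "a < 1" "b < 1" using a b by auto
  ultimately show ?thesis using a b x0(1) y(1) by metis
qed

lemma alpha_const:
  assumes f: "f \<in> F" and g: "g \<in> F" and wf: "mC f < MD f" and wg: "mC g < MD g"
  shows "(MD f - V f) / (MD f - mC f) = (MD g - V g) / (MD g - mC g)"
proof -
  obtain a b x y where ab: "0 < a" "a < 1" "0 < b" "b < 1" "x \<in> X" "y \<in> X"
    "a * (MD f - mC f) = b * (MD g - mC g)" "a * MD f + (1 - a) * u x = b * MD g + (1 - b) * u y"
    using match[of "MD f - mC f" "MD g - mC g" "MD f" "MD g"] wf wg by auto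
  note fb = mixc_bounds[OF f ab(5) ab(1,2)] and gb = mixc_bounds[OF g ab(6) ab(3,4)]
  have M: "MD (mix b g (\<lambda>_. y)) = MD (mix a f (\<lambda>_. x))" using fb(3) gb(3) ab(8) by simp
  have m1: "mC (mix a f (\<lambda>_. x)) = MD (mix a f (\<lambda>_. x)) - a * (MD f - mC f)"
    using fb(2,3) by (simp add: algebra_simps)
  have m2: "mC (mix b g (\<lambda>_. y)) = MD (mix b g (\<lambda>_. y)) - b * (MD g - mC g)"
    using gb(2,3) by (simp add: algebra_simps)
  have m: "mC (mix b g (\<lambda>_. y)) = mC (mix a f (\<lambda>_. x))" using m1 m2 M ab(7) by simp
  have VV: "V (mix b g (\<lambda>_. y)) = V (mix a f (\<lambda>_. x))" by (rule V_eq[OF fb(1) gb(1) m M])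
  have "a * (MD f - V f) = MD (mix a f (\<lambda>_. x)) - V (mix a f (\<lambda>_. x))"
    using fb(3) V_mixc[OF f ab(5) ab(1,2)] by (simp add: algebra_simps)
  also have "\<dots> = MD (mix b g (\<lambda>_. y)) - V (mix b g (\<lambda>_. y))" using M VV by simp
  also have "\<dots> = b * (MD g - V g)"
    using gb(3) V_mixc[OF g ab(6) ab(3,4)] by (simp add: algebra_simps)
  finally have eq: "a * (MD f - V f) = b * (MD g - V g)" .
  have "(MD f - V f) / (MD f - mC f) = (a * (MD f - V f)) / (a * (MD f - mC f))"
    using ab(1) by simp
  also have "\<dots> = (b * (MD g - V g)) / (b * (MD g - mC g))" using eq ab(7) by simp
  also have "\<dots> = (MD g - V g) / (MD g - mC g)" using ab(3) by simp
  finally show ?thesis .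
qed

lemma V_W:
  "\<exists>al\<in>{0..1}. \<forall>f\<in>F. V f = W al f"
proof (cases "\<exists>f0\<in>F. mC f0 < MD f0")
  case True
  then obtain f0 where f0: "f0 \<in> F" "mC f0 < MD f0" by blast
  define al where "al = (MD f0 - V f0) / (MD f0 - mC f0)"
  have al: "0 \<le> al" "al \<le> 1" unfolding al_def using f0 V_prop(1,2)[OF f0(1)] by (auto simp: field_simps)
  have "V f = W al f" if f: "f \<in> F" for f
  proof (cases "mC f < MD f")
    case True
    have "al = (MD f - V f) / (MD f - mC f)" unfolding al_def by (rule alpha_const[OF f0(1) f f0(2) True])
    then have "al * (MD f - mC f) = MD f - V f" using True by simp
    then show ?thesis unfolding W_def by (simp add: algebra_simps)
  next
    case False
    then have "mC f = MD f" using m_le_M[OF f] by simp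
    then show ?thesis using V_prop(1,2)[OF f] W_range[OF f al] by simp
  qed
  then show ?thesis using al by auto
next
  case False
  have "V f = W 0 f" if f: "f \<in> F" for f
  proof -
    have "mC f = MD f" using False m_le_M[OF f] f by force
    then show ?thesis using V_prop(1,2)[OF f] unfolding W_def by simp
  qed
  then show ?thesis by force
qed

lemma i_to_ii:
  "\<exists>al\<in>{0..1}. \<forall>f\<in>F. \<forall>g\<in>F. Rs f g \<longleftrightarrow> W al g < W al f"
  using V_W V_rep by metis

end


theorem theorem3:
  fixes Sig :: "'a set set" and X :: "'b::real_vector set"
    and R Rs :: "('a \<Rightarrow> 'b) \<Rightarrow> ('a \<Rightarrow> 'b) \<Rightarrow> bool"
    and u :: "'b \<Rightarrow> real" and C D :: "('a set \<Rightarrow> real) set"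
  assumes "algebra UNIV Sig"
    and "convex X" and "\<exists>x\<in>X. \<exists>y\<in>X. x \<noteq> y"
    and "unique_hp_rep Sig X R u C D"
  shows "(invariant_biseparable Sig X Rs \<and>
          (\<forall>f\<in>simple_acts Sig X. \<forall>g\<in>simple_acts Sig X. R f g \<longrightarrow> Rs f g))
     \<longleftrightarrow>
         ((\<exists>a\<in>{0..1::real}. \<forall>f\<in>simple_acts Sig X. \<forall>g\<in>simple_acts Sig X.
              Rs f g \<longleftrightarrow> a * minEU u C f + (1 - a) * maxEU u D f
                          > a * minEU u C g + (1 - a) * maxEU u D g) \<and>
          (\<not> rel_complete R (simple_acts Sig X) \<longrightarrow>
             (\<forall>a\<in>{0..1::real}. \<forall>b\<in>{0..1::real}.
                (\<forall>f\<in>simple_acts Sig X. \<forall>g\<in>simple_acts Sig X.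
                   Rs f g \<longleftrightarrow> a * minEU u C f + (1 - a) * maxEU u D f
                               > a * minEU u C g + (1 - a) * maxEU u D g) \<and>
                (\<forall>f\<in>simple_acts Sig X. \<forall>g\<in>simple_acts Sig X.
                   Rs f g \<longleftrightarrow> b * minEU u C f + (1 - b) * maxEU u D f
                               > b * minEU u C g + (1 - b) * maxEU u D g)
                \<longrightarrow> a = b)))"
proof -
  from assms(4) have hp: "hp_rep Sig X R u C D" unfolding unique_hp_rep_def by blast
  have hs: "hp_setup Sig X u C D"
    using hp assms(1,2) unfolding hp_rep_def hp_setup_def by blast
  interpret hp_setup Sig X u C D by (rule hs)
  have Rrep: "\<forall>f\<in>F. \<forall>g\<in>F. R f g \<longleftrightarrow> mC g < mC f \<and> MD g < MD f"
    using hp unfolding hp_rep_def by auto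
  have Weq: "\<And>a f. a * minEU u C f + (1 - a) * maxEU u D f = W a f" by (simp add: W_def)
  have uniq: "\<not> rel_complete R F \<longrightarrow> (\<forall>a\<in>{0..1::real}. \<forall>b\<in>{0..1::real}.
      (\<forall>f\<in>F. \<forall>g\<in>F. Rs f g \<longleftrightarrow> W a g < W a f) \<and> (\<forall>f\<in>F. \<forall>g\<in>F. Rs f g \<longleftrightarrow> W b g < W b f) \<longrightarrow> a = b)"
  proof (intro impI ballI)
    fix a b :: real
    assume n: "\<not> rel_complete R F" and a: "a \<in> {0..1}" and b: "b \<in> {0..1}"
      and r: "(\<forall>f\<in>F. \<forall>g\<in>F. Rs f g \<longleftrightarrow> W a g < W a f) \<and> (\<forall>f\<in>F. \<forall>g\<in>F. Rs f g \<longleftrightarrow> W b g < W b f)"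
    show "a = b" using rep_uniq[of a b Rs R] a b r Rrep n by auto
  qed
  show ?thesis unfolding Weq
  proof
    assume L: "invariant_biseparable Sig X Rs \<and> (\<forall>f\<in>F. \<forall>g\<in>F. R f g \<longrightarrow> Rs f g)"
    have "hp_ext Sig X u C D Rs"
    proof (intro hp_ext.intro hs hp_ext_axioms.intro)
      show "invariant_biseparable Sig X Rs" using L by blast
      fix f g assume "f \<in> F" "g \<in> F" "mC g < mC f" "MD g < MD f"
      then show "Rs f g" using L Rrep by blast
    qed
    then interpret E: hp_ext Sig X u C D Rs .
    show "(\<exists>a\<in>{0..1::real}. \<forall>f\<in>F. \<forall>g\<in>F. Rs f g \<longleftrightarrow> W a g < W a f) \<and>
      (\<not> rel_complete R F \<longrightarrow> (\<forall>a\<in>{0..1::real}. \<forall>b\<in>{0..1::real}.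
      (\<forall>f\<in>F. \<forall>g\<in>F. Rs f g \<longleftrightarrow> W a g < W a f) \<and> (\<forall>f\<in>F. \<forall>g\<in>F. Rs f g \<longleftrightarrow> W b g < W b f) \<longrightarrow> a = b))"
      using E.i_to_ii uniq by blast
  next
    assume Rt: "(\<exists>a\<in>{0..1::real}. \<forall>f\<in>F. \<forall>g\<in>F. Rs f g \<longleftrightarrow> W a g < W a f) \<and>
      (\<not> rel_complete R F \<longrightarrow> (\<forall>a\<in>{0..1::real}. \<forall>b\<in>{0..1::real}.
      (\<forall>f\<in>F. \<forall>g\<in>F. Rs f g \<longleftrightarrow> W a g < W a f) \<and> (\<forall>f\<in>F. \<forall>g\<in>F. Rs f g \<longleftrightarrow> W b g < W b f) \<longrightarrow> a = b))"
    then obtain a where a0: "a \<in> {0..1}" and rep: "\<forall>f\<in>F. \<forall>g\<in>F. Rs f g \<longleftrightarrow> W a g < W a f"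
      by (elim conjE bexE) blast
    have a: "0 \<le> a" "a \<le> 1" using a0 by auto
    have IB: "invariant_biseparable Sig X Rs" by (rule ii_to_i[OF a]) (use rep in blast)
    have "R f g \<longrightarrow> Rs f g" if f: "f \<in> F" and g: "g \<in> F" for f g
    proof
      assume "R f g"
      then have lt: "mC g < mC f" "MD g < MD f" using Rrep f g by auto
      have "a * mC g \<le> a * mC f" "(1 - a) * MD g \<le> (1 - a) * MD f"
        using lt a by (auto intro: mult_left_mono)
      moreover have "a * mC g < a * mC f \<or> (1 - a) * MD g < (1 - a) * MD f"
        using lt a by (cases "a = 0") auto
      ultimately have "W a g < W a f" unfolding W_def by linarith
      then show "Rs f g" using rep f g by auto
    qed
    then show "invariant_biseparable Sig X Rs \<and> (\<forall>f\<in>F. \<forall>g\<in>F. R f g \<longrightarrow> Rs f g)" using IB by blast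
  qed
qed

end
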